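(* Let $\beta$ be a Brownian bridge from $0$ to $0$ on $[0,1]$ and $c\in\mathbb R$. Define $\beta^c_t:=\beta_t+6\,t(1-t)\bigl(c-\int_0^1\beta_r\,dr\bigr)$, $t\in[0,1]$, and for $\omega\in C([0,1])$ \[ \Gamma^\omega_t:=\begin{cases}\omega_t, & t\in[0,1/3]\cup[2/3,1],\\ \omega_t+18\bigl(9\,t(1-t)-2\bigr)\Bigl(c-\int_0^1\omega_r\,dr\Bigr), & t\in[1/3,2/3],\end{cases} \] \[ \rho_1(\omega):=\sqrt{27}\,\exp\Bigl(-162\Bigl(\int_0^{1/3}(\omega_r+\omega_{1-r})\,dr+\frac{\omega_{1/3}+\omega_{2/3}}6-c\Bigr)^2+6c^2\Bigr). \] Then for all bounded Borel $\Phi:C([0,1])\to\mathbb R$, \[ \mathbb E\Bigl[\Phi(\beta)\,\Big|\,\int_0^1\beta=c\Bigr]=\mathbb E[\Phi(\beta^c)]=\mathbb E\bigl[\Phi(\Gamma^\beta)\,\rho_1(\Gamma^\beta)\bigr]. \]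
   Context: Here $\mathbb E[\Phi(\beta)\,|\,\int_0^1\beta=c]$ denotes the (Gaussian) conditional law of $\beta$ given $\int_0^1\beta_r\,dr=c$, which is the law of $\beta^c$. *)

theory Defs
  imports "HOL-Probability.Probability"
begin

text \<open>Joint Gaussianity is expressed via the characteristic function
  of every finite linear combination (allowing degenerate variance).\<close>
definition brownian_bridge :: "'a measure \<Rightarrow> (real \<Rightarrow> 'a \<Rightarrow> real) \<Rightarrow> bool" where
  "brownian_bridge M \<beta> \<longleftrightarrow>
     prob_space M \<and>
     (\<forall>t\<in>{0..1}. \<beta> t \<in> borel_measurable M) \<and>
     (\<forall>\<omega>\<in>space M. continuous_on {0..1} (\<lambda>t. \<beta> t \<omega>) \<and> \<beta> 0 \<omega> = 0 \<and> \<beta> 1 \<omega> = 0) \<and>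
     (\<forall>I a. finite I \<longrightarrow> I \<subseteq> {0..1} \<longrightarrow>
        (\<forall>u::real. char (distr M borel (\<lambda>\<omega>. \<Sum>t\<in>I. a t * \<beta> t \<omega>)) u =
           complex_of_real (exp (- (u\<^sup>2 * (\<Sum>s\<in>I. \<Sum>t\<in>I. a s * a t * (min s t - s * t))) / 2))))"

text \<open>Path space C([0,1]) is modelled by functions on [0,1] (extensional outside)
  with the cylinder sigma-algebra, whose trace on continuous paths is the Borel
  sigma-algebra of C([0,1]) with the sup norm.\<close>
abbreviation path_space :: "(real \<Rightarrow> real) measure" where
  "path_space \<equiv> PiM {0..1} (\<lambda>_. borel)"

definition bb_path :: "(real \<Rightarrow> 'a \<Rightarrow> real) \<Rightarrow> 'a \<Rightarrow> (real \<Rightarrow> real)" where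
  "bb_path \<beta> \<omega> = (\<lambda>t\<in>{0..1}. \<beta> t \<omega>)"

definition beta_c :: "real \<Rightarrow> (real \<Rightarrow> real) \<Rightarrow> (real \<Rightarrow> real)" where
  "beta_c c x = (\<lambda>t\<in>{0..1}. x t + 6 * t * (1 - t) * (c - integral {0..1} x))"

definition Gamma_c :: "real \<Rightarrow> (real \<Rightarrow> real) \<Rightarrow> (real \<Rightarrow> real)" where
  "Gamma_c c x = (\<lambda>t\<in>{0..1}. if t \<in> {1/3..2/3}
      then x t + 18 * (9 * t * (1 - t) - 2) * (c - integral {0..1} x)
      else x t)"

definition rho1 :: "real \<Rightarrow> (real \<Rightarrow> real) \<Rightarrow> real" where
  "rho1 c x = sqrt 27 * exp (- 162 * (integral {0..1/3} (\<lambda>r. x r + x (1 - r))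
       + (x (1/3) + x (2/3)) / 6 - c)\<^sup>2 + 6 * c\<^sup>2)"

end

theory Submission
  imports Defs
begin

lemma FL:
  fixes m1 m2 :: "real measure"
  assumes f1: "finite_measure m1" and f2: "finite_measure m2"
    and s1: "sets m1 = sets borel" and s2: "sets m2 = sets borel"
    and eq: "\<And>t. (CLINT x|m1. iexp (t * x)) = (CLINT x|m2. iexp (t * x))"
  shows "m1 = m2"
proof -
  interpret m1: finite_measure m1 by fact
  interpret m2: finite_measure m2 by fact
  have sp1: "space m1 = UNIV" using sets_eq_imp_space_eq[OF s1] by simp
  have sp2: "space m2 = UNIV" using sets_eq_imp_space_eq[OF s2] by simp
  have "complex_of_real (measure m1 UNIV) = complex_of_real (measure m2 UNIV)"
    using eq[of 0] by (simp add: sp1 sp2 scaleR_conv_of_real)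
  then have ceq: "measure m1 UNIV = measure m2 UNIV" by simp
  define c where "c = measure m1 UNIV"
  have cnn: "c \<ge> 0" unfolding c_def by simp
  show ?thesis
  proof (cases "c = 0")
    case True
    show ?thesis
    proof (rule measure_eqI)
      show "sets m1 = sets m2" using s1 s2 by simp
      fix A assume A: "A \<in> sets m1"
      have A2: "A \<in> sets m2" using A s1 s2 by simp
      have "measure m1 A \<le> measure m1 (space m1)" by (rule m1.bounded_measure)
      then have z1: "measure m1 A = 0" using True sp1 c_def by (simp add: antisym)
      have "measure m2 A \<le> measure m2 (space m2)" by (rule m2.bounded_measure)
      then have z2: "measure m2 A = 0" using True sp2 c_def ceq by (simp add: antisym)
      show "emeasure m1 A = emeasure m2 A"
        using z1 z2 m1.emeasure_eq_measure m2.emeasure_eq_measure by simp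
    qed
  next
    case False
    then have cpos: "c > 0" using cnn by simp
    define d1 where "d1 = density m1 (\<lambda>_. ennreal (1/c))"
    define d2 where "d2 = density m2 (\<lambda>_. ennreal (1/c))"
    have e1: "emeasure d1 A = ennreal (1/c) * emeasure m1 A" if "A \<in> sets m1" for A
      unfolding d1_def using that by (rule emeasure_density_const)
    have e2: "emeasure d2 A = ennreal (1/c) * emeasure m2 A" if "A \<in> sets m2" for A
      unfolding d2_def using that by (rule emeasure_density_const)
    have U1: "UNIV \<in> sets m1" using sets.top[of m1] sp1 by simp
    have U2: "UNIV \<in> sets m2" using sets.top[of m2] sp2 by simp
    have rd1: "real_distribution d1"
    proof -
      have "emeasure d1 (space d1) = 1"
        using e1[OF U1] sp1 cpos  by (simp add: d1_def m1.emeasure_eq_measure c_def[symmetric]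
             ennreal_mult[symmetric])
      then have "prob_space d1" by (rule prob_spaceI)
      moreover have "sets d1 = sets borel" using s1 by (simp add: d1_def)
      ultimately show ?thesis by (simp add: real_distribution_def real_distribution_axioms_def)
    qed
    have rd2: "real_distribution d2"
    proof -
      have "emeasure d2 (space d2) = 1"
        using e2[OF U2] sp2 cpos ceq by (simp add: d2_def m2.emeasure_eq_measure c_def[symmetric]
             ennreal_mult[symmetric])
      then have "prob_space d2" by (rule prob_spaceI)
      moreover have "sets d2 = sets borel" using s2 by (simp add: d2_def)
      ultimately show ?thesis by (simp add: real_distribution_def real_distribution_axioms_def)
    qed
    have "char d1 = char d2"
    proof
      fix t
      have "char d1 t = (1/c) *\<^sub>R (CLINT x|m1. iexp (t * x))"
        unfolding char_def d1_def using cpos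
        by (subst integral_density) (auto simp: measurable_cong_sets[OF s1 refl])
      also have "\<dots> = (1/c) *\<^sub>R (CLINT x|m2. iexp (t * x))" using eq[of t] by simp
      also have "\<dots> = char d2 t"
        unfolding char_def d2_def using cpos
        by (subst integral_density) (auto simp: measurable_cong_sets[OF s2 refl])
      finally show "char d1 t = char d2 t" .
    qed
    then have deq: "d1 = d2" using Levy_uniqueness rd1 rd2 by blast
    show ?thesis
    proof (rule measure_eqI)
      show "sets m1 = sets m2" using s1 s2 by simp
      fix A assume A: "A \<in> sets m1"
      have A2: "A \<in> sets m2" using A s1 s2 by simp
      have "ennreal c * emeasure d1 A = emeasure m1 A"
        using e1[OF A] cpos by (simp add: mult.assoc[symmetric] ennreal_mult[symmetric])
      moreover have "ennreal c * emeasure d2 A = emeasure m2 A"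
        using e2[OF A2] cpos by (simp add: mult.assoc[symmetric] ennreal_mult[symmetric])
      ultimately show "emeasure m1 A = emeasure m2 A" using deq by simp
    qed
  qed
qed

lemma cos_iexp: "complex_of_real (1 + cos s) * iexp u = iexp u + iexp (u + s)/2 + iexp (u - s)/2"
  by (simp add: cos_exp_eq cos_of_real[symmetric] exp_add[symmetric] exp_diff algebra_simps add_divide_distrib diff_divide_distrib)

lemma iexp_cos_sin: "iexp w = complex_of_real (cos w) + \<i> * complex_of_real (cos (w - pi/2))"
  by (simp add: cos_diff exp_Euler cos_of_real sin_of_real)

lemma meas_tr: "sets \<mu> = sets N \<Longrightarrow> f \<in> borel_measurable N \<Longrightarrow> f \<in> borel_measurable \<mu>"
  using measurable_cong_sets[of \<mu> N borel borel] by simp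

lemma integrable_bdd_fin:
  fixes f :: "'a \<Rightarrow> 'b::{banach,second_countable_topology}"
  assumes "finite_measure M" "f \<in> borel_measurable M" "\<And>x. x \<in> space M \<Longrightarrow> norm (f x) \<le> B"
  shows "integrable M f"
  by (rule finite_measure.integrable_const_bound[where B=B, OF assms(1) AE_I2[OF assms(3)] assms(2)])
lemma finite_density_bdd:
  assumes "finite_measure M" "g \<in> borel_measurable M" "\<And>x. x \<in> space M \<Longrightarrow> 0 \<le> g x \<and> g x \<le> B"
  shows "finite_measure (density M (\<lambda>x. ennreal (g x)))"
proof (rule finite_measureI)
  interpret finite_measure M by fact
  have "emeasure (density M (\<lambda>x. ennreal (g x))) (space M) = (\<integral>\<^sup>+x. ennreal (g x) * indicator (space M) x \<partial>M)"
    using assms(2) by (subst emeasure_density) auto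
  also have "\<dots> \<le> (\<integral>\<^sup>+x. ennreal B \<partial>M)"
    using assms(3) by (intro nn_integral_mono) (auto simp: indicator_def intro: ennreal_leI)
  also have "\<dots> < \<infinity>" using emeasure_finite[of "space M"] by (simp add: ennreal_mult_eq_top_iff less_top[symmetric])
  finally show "emeasure (density M (\<lambda>x. ennreal (g x))) (space (density M (\<lambda>x. ennreal (g x)))) \<noteq> \<infinity>"
    by simp
qed

lemma meas_tr': "sets \<mu> = sets N \<Longrightarrow> f \<in> measurable N K \<Longrightarrow> f \<in> measurable \<mu> K"
  using measurable_cong_sets[of \<mu> N K K] by simp

lemma CW_core:
  fixes \<mu> \<nu> :: "('i \<Rightarrow> real) measure"
  assumes fin: "finite J" and jn: "j \<notin> J"
    and f1: "finite_measure \<mu>" and f2: "finite_measure \<nu>"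
    and s1: "sets \<mu> = sets (PiM (insert j J) (\<lambda>_. borel))"
    and s2: "sets \<nu> = sets (PiM (insert j J) (\<lambda>_. borel))"
    and hyp: "\<And>a. (CLINT x|\<mu>. iexp (\<Sum>i\<in>insert j J. a i * x i)) = (CLINT x|\<nu>. iexp (\<Sum>i\<in>insert j J. a i * x i))"
    and E: "E \<in> sets borel"
  shows "(CLINT x|\<mu>. indicator E (x j) *\<^sub>R iexp (\<Sum>i\<in>J. a i * x i)) =
         (CLINT x|\<nu>. indicator E (x j) *\<^sub>R iexp (\<Sum>i\<in>J. a i * x i))"
proof -
  interpret m1: finite_measure \<mu> by fact
  interpret m2: finite_measure \<nu> by fact
  let ?P = "PiM (insert j J) (\<lambda>_. borel) :: ('i \<Rightarrow> real) measure"
  have mj: "(\<lambda>x. x j) \<in> borel_measurable ?P" by measurable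
  have ms: "(\<lambda>x. \<Sum>i\<in>J. a i * x i) \<in> borel_measurable ?P" for a by measurable
  have indm: "(\<lambda>x. indicator E (x j) :: real) \<in> borel_measurable ?P"
    by (rule measurable_compose[OF mj borel_measurable_indicator[OF E]])
  have hyp': "(CLINT x|\<mu>. iexp (t * x j + \<sigma> * (\<Sum>i\<in>J. a i * x i))) =
      (CLINT x|\<nu>. iexp (t * x j + \<sigma> * (\<Sum>i\<in>J. a i * x i)))" for t \<sigma> a
  proof -
    define a' where "a' = (\<lambda>i. if i = j then t else \<sigma> * a i)"
    have "(\<Sum>i\<in>insert j J. a' i * x i) = t * x j + \<sigma> * (\<Sum>i\<in>J. a i * x i)" for x :: "'i \<Rightarrow> real"
    proof -
      have "(\<Sum>i\<in>J. a' i * x i) = (\<Sum>i\<in>J. \<sigma> * (a i * x i))"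
        using jn by (intro sum.cong) (auto simp: a'_def)
      then show ?thesis using fin jn by (simp add: a'_def sum_distrib_left)
    qed
    then show ?thesis using hyp[of a'] by simp
  qed
  define w where "w = (\<lambda>a x. (\<Sum>i\<in>J. a i * (x::'i\<Rightarrow>real) i))"
  have C1: "(\<integral>x. (1 + cos (w a x + \<theta>)) * indicator E (x j) \<partial>\<mu>) =
            (\<integral>x. (1 + cos (w a x + \<theta>)) * indicator E (x j) \<partial>\<nu>)" for a \<theta>
  proof -
    define g where "g = (\<lambda>x. 1 + cos (w a x + \<theta>))"
    have gm: "g \<in> borel_measurable ?P" unfolding g_def w_def by measurable
    have g01: "0 \<le> g x \<and> g x \<le> 2" for x unfolding g_def
      using cos_ge_minus_one[of "w a x + \<theta>"] cos_le_one[of "w a x + \<theta>"] by linarith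
    define l1 where "l1 = distr (density \<mu> (\<lambda>x. ennreal (g x))) borel (\<lambda>x. x j)"
    define l2 where "l2 = distr (density \<nu> (\<lambda>x. ennreal (g x))) borel (\<lambda>x. x j)"
    have sd1: "sets (density \<mu> (\<lambda>x. ennreal (g x))) = sets ?P" using s1 by simp
    have sd2: "sets (density \<nu> (\<lambda>x. ennreal (g x))) = sets ?P" using s2 by simp
    have fd1: "finite_measure (density \<mu> (\<lambda>x. ennreal (g x)))"
      by (rule finite_density_bdd[OF f1 meas_tr[OF s1 gm] g01])
    have fd2: "finite_measure (density \<nu> (\<lambda>x. ennreal (g x)))"
      by (rule finite_density_bdd[OF f2 meas_tr[OF s2 gm] g01])
    have fl1: "finite_measure l1" unfolding l1_def
      by (rule finite_measure.finite_measure_distr[OF fd1 meas_tr[OF sd1 mj]])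
    have fl2: "finite_measure l2" unfolding l2_def
      by (rule finite_measure.finite_measure_distr[OF fd2 meas_tr[OF sd2 mj]])
    have decomp: "(CLINT x|m. g x *\<^sub>R iexp (t * x j)) =
       (CLINT x|m. iexp (t * x j + 0 * w a x)) + iexp \<theta> / 2 * (CLINT x|m. iexp (t * x j + 1 * w a x))
        + iexp (-\<theta>) / 2 * (CLINT x|m. iexp (t * x j + (-1) * w a x))"
      if fm: "finite_measure m" and sm: "sets m = sets ?P" for m t
    proof -
      have int: "integrable m (\<lambda>x. iexp (t * x j + \<sigma> * w a x))" for \<sigma>
      proof (rule integrable_bdd_fin[OF fm meas_tr[OF sm]])
        show "(\<lambda>x. iexp (t * x j + \<sigma> * w a x)) \<in> borel_measurable ?P" unfolding w_def by measurable
        show "norm (iexp (t * x j + \<sigma> * w a x)) \<le> 1" for x by simp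
      qed
      have pw: "g x *\<^sub>R iexp (t * x j) = iexp (t * x j + 0 * w a x) + iexp \<theta> / 2 * iexp (t * x j + 1 * w a x)
        + iexp (-\<theta>) / 2 * iexp (t * x j + (-1) * w a x)" for x
      proof -
        have "g x *\<^sub>R iexp (t * x j) = complex_of_real (1 + cos (w a x + \<theta>)) * iexp (t * x j)"
          by (simp add: g_def scaleR_conv_of_real)
        also have "\<dots> = iexp (t * x j) + iexp (t * x j + (w a x + \<theta>))/2 + iexp (t * x j - (w a x + \<theta>))/2"
          by (rule cos_iexp)
        also have "iexp (t * x j + (w a x + \<theta>)) = iexp \<theta> * iexp (t * x j + 1 * w a x)"
          by (simp add: exp_add[symmetric] algebra_simps)
        also have "iexp (t * x j - (w a x + \<theta>)) = iexp (-\<theta>) * iexp (t * x j + (-1) * w a x)"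
          by (simp add: exp_add[symmetric] algebra_simps)
        finally show ?thesis by simp
      qed
      have i1: "integrable m (\<lambda>x. c * iexp (t * x j + \<sigma> * w a x))" for c \<sigma>
        by (rule integrable_mult_right[OF int])
      have "(CLINT x|m. g x *\<^sub>R iexp (t * x j)) = (CLINT x|m. (iexp (t * x j + 0 * w a x) + iexp \<theta> / 2 * iexp (t * x j + 1 * w a x))
        + iexp (-\<theta>) / 2 * iexp (t * x j + (-1) * w a x))" by (simp only: pw)
      also have "\<dots> = (CLINT x|m. iexp (t * x j + 0 * w a x) + iexp \<theta> / 2 * iexp (t * x j + 1 * w a x))
        + (CLINT x|m. iexp (-\<theta>) / 2 * iexp (t * x j + (-1) * w a x))"
        by (rule Bochner_Integration.integral_add[OF Bochner_Integration.integrable_add[OF int i1] i1])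
      also have "(CLINT x|m. iexp (t * x j + 0 * w a x) + iexp \<theta> / 2 * iexp (t * x j + 1 * w a x)) =
         (CLINT x|m. iexp (t * x j + 0 * w a x)) + (CLINT x|m. iexp \<theta> / 2 * iexp (t * x j + 1 * w a x))"
        by (rule Bochner_Integration.integral_add[OF int i1])
      finally show ?thesis by (simp only: integral_mult_right_zero)
    qed
    have ch: "(CLINT y|distr (density m (\<lambda>x. ennreal (g x))) borel (\<lambda>x. x j). iexp (t * y)) =
        (CLINT x|m. g x *\<^sub>R iexp (t * x j))"
      if sm: "sets m = sets ?P" for m t
    proof -
      have sd: "sets (density m (\<lambda>x. ennreal (g x))) = sets ?P" using sm by simp
      have "(CLINT y|distr (density m (\<lambda>x. ennreal (g x))) borel (\<lambda>x. x j). iexp (t * y)) =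
          (CLINT x|density m (\<lambda>x. ennreal (g x)). iexp (t * x j))"
        by (rule integral_distr[OF meas_tr[OF sd mj]]) measurable
      also have "\<dots> = (CLINT x|m. g x *\<^sub>R iexp (t * x j))"
      proof (rule integral_density)
        show "(\<lambda>x. iexp (t * x j)) \<in> borel_measurable m" by (rule meas_tr[OF sm]) measurable
        show "g \<in> borel_measurable m" by (rule meas_tr[OF sm gm])
        show "AE x in m. 0 \<le> g x" using g01 by simp
      qed
      finally show ?thesis .
    qed
    have "l1 = l2"
    proof (rule FL[OF fl1 fl2])
      show "sets l1 = sets borel" "sets l2 = sets borel" by (simp_all add: l1_def l2_def)
      fix t
      show "(CLINT y|l1. iexp (t * y)) = (CLINT y|l2. iexp (t * y))"
        unfolding l1_def l2_def ch[OF s1] ch[OF s2] decomp[OF f1 s1] decomp[OF f2 s2]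
        using hyp'[of t 0 a] hyp'[of t 1 a] hyp'[of t "-1" a] unfolding w_def by simp
    qed
    have ich: "(\<integral>y. (indicator E y :: real) \<partial>distr (density m (\<lambda>x. ennreal (g x))) borel (\<lambda>x. x j)) =
        (\<integral>x. g x * indicator E (x j) \<partial>m)"
      if sm: "sets m = sets ?P" for m
    proof -
      have sd: "sets (density m (\<lambda>x. ennreal (g x))) = sets ?P" using sm by simp
      have "(\<integral>y. (indicator E y :: real) \<partial>distr (density m (\<lambda>x. ennreal (g x))) borel (\<lambda>x. x j)) =
          (\<integral>x. (indicator E (x j)::real) \<partial>density m (\<lambda>x. ennreal (g x)))"
        by (rule integral_distr[OF meas_tr[OF sd mj]]) (use E in simp)
      also have "\<dots> = (\<integral>x. g x *\<^sub>R indicator E (x j) \<partial>m)"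
      proof (rule integral_density)
        show "(\<lambda>x. indicator E (x j) :: real) \<in> borel_measurable m" by (rule meas_tr[OF sm indm])
        show "g \<in> borel_measurable m" by (rule meas_tr[OF sm gm])
        show "AE x in m. 0 \<le> g x" using g01 by simp
      qed
      finally show ?thesis by simp
    qed
    show ?thesis
      using ich[OF s1] ich[OF s2] \<open>l1 = l2\<close> unfolding l1_def l2_def g_def by simp
  qed
  have intind: "integrable m (\<lambda>x. f x * indicator E (x j))"
    if fm: "finite_measure m" and sm: "sets m = sets ?P" and fmeas: "f \<in> borel_measurable ?P"
       and fb: "\<And>x. \<bar>f x\<bar> \<le> 2" for m and f :: "('i \<Rightarrow> real) \<Rightarrow> real"
  proof -
    have m: "(\<lambda>x. f x * indicator E (x j)) \<in> borel_measurable ?P" using fmeas indm by (rule borel_measurable_times)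
    have b: "norm (f x * indicator E (x j)) \<le> 2" for x using fb[of x] by (simp add: indicator_def abs_mult)
    show ?thesis by (rule integrable_bdd_fin[OF fm meas_tr[OF sm m] b])
  qed
  have C0: "(\<integral>x. (indicator E (x j)::real) \<partial>\<mu>) = (\<integral>x. (indicator E (x j)::real) \<partial>\<nu>)"
    using C1[of "\<lambda>_. 0" "pi/2"] by (simp add: w_def)
  have C2: "(\<integral>x. cos (w a x + \<theta>) * indicator E (x j) \<partial>\<mu>) =
            (\<integral>x. cos (w a x + \<theta>) * indicator E (x j) \<partial>\<nu>)" for a \<theta>
  proof -
    have cm: "(\<lambda>x. cos (w a x + \<theta>)) \<in> borel_measurable ?P" unfolding w_def by measurable
    have om: "(\<lambda>x. 1::real) \<in> borel_measurable ?P" by simp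
    have ob: "\<And>x::'i\<Rightarrow>real. \<bar>1::real\<bar> \<le> 2" by simp
    have cb: "\<bar>cos (w a x + \<theta>)\<bar> \<le> 2" for x using abs_cos_le_one[of "w a x + \<theta>"] by linarith
    have split: "(\<integral>x. (1 + cos (w a x + \<theta>)) * indicator E (x j) \<partial>m) =
       (\<integral>x. 1 * indicator E (x j) \<partial>m) + (\<integral>x. cos (w a x + \<theta>) * indicator E (x j) \<partial>m)"
      if fm: "finite_measure m" and sm: "sets m = sets ?P" for m
      by (simp only: distrib_right Bochner_Integration.integral_add[OF intind[OF fm sm om ob] intind[OF fm sm cm cb]])
    show ?thesis using C1[of a \<theta>] C0 split[OF f1 s1] split[OF f2 s2] by simp
  qed
  have fin_eq: "(CLINT x|m. indicator E (x j) *\<^sub>R iexp (\<Sum>i\<in>J. a i * x i)) =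
     complex_of_real (\<integral>x. cos (w a x + 0) * indicator E (x j) \<partial>m)
     + \<i> * complex_of_real (\<integral>x. cos (w a x + (- (pi/2))) * indicator E (x j) \<partial>m)"
    if fm: "finite_measure m" and sm: "sets m = sets ?P" for m
  proof -
    have cm: "(\<lambda>x. cos (w a x + \<theta>)) \<in> borel_measurable ?P" for \<theta> unfolding w_def by measurable
    have cb: "\<bar>cos (w a x + \<theta>)\<bar> \<le> 2" for x \<theta> using abs_cos_le_one[of "w a x + \<theta>"] by linarith
    have pw: "indicator E (x j) *\<^sub>R iexp (\<Sum>i\<in>J. a i * x i) =
        complex_of_real (cos (w a x + 0) * indicator E (x j))
        + \<i> * complex_of_real (cos (w a x + (- (pi/2))) * indicator E (x j))" for x
      unfolding iexp_cos_sin[of "\<Sum>i\<in>J. a i * x i"] w_def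
      by (simp add: scaleR_conv_of_real algebra_simps)
    have i1: "integrable m (\<lambda>x. complex_of_real (cos (w a x + \<theta>) * indicator E (x j)))" for \<theta>
      by (rule integrable_of_real[OF intind[OF fm sm cm cb]])
    show ?thesis
      by (simp only: pw Bochner_Integration.integral_add i1 integrable_mult_right integral_mult_right_zero integral_complex_of_real)
  qed
  show ?thesis
    using fin_eq[OF f1 s1] fin_eq[OF f2 s2] C2[of a 0] C2[of a "-(pi/2)"] by simp
qed

lemma CW:
  fixes \<mu> \<nu> :: "('i \<Rightarrow> real) measure"
  assumes "finite J" "finite_measure \<mu>" "finite_measure \<nu>"
    "sets \<mu> = sets (PiM J (\<lambda>_. borel))" "sets \<nu> = sets (PiM J (\<lambda>_. borel))"
    "\<And>a. (CLINT x|\<mu>. iexp (\<Sum>j\<in>J. a j * x j)) = (CLINT x|\<nu>. iexp (\<Sum>j\<in>J. a j * x j))"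
  shows "\<mu> = \<nu>"
  using assms
proof (induction J arbitrary: \<mu> \<nu> rule: finite_induct)
  case empty
  interpret m1: finite_measure \<mu> by fact
  interpret m2: finite_measure \<nu> by fact
  have sp1: "space \<mu> = {\<lambda>_. undefined}" using sets_eq_imp_space_eq[OF empty(3)] by (simp add: space_PiM)
  have sp2: "space \<nu> = {\<lambda>_. undefined}" using sets_eq_imp_space_eq[OF empty(4)] by (simp add: space_PiM)
  have "complex_of_real (measure \<mu> (space \<mu>)) = complex_of_real (measure \<nu> (space \<nu>))"
    using empty(5)[of "\<lambda>_. 0"] by (simp add: scaleR_conv_of_real)
  then have meq: "measure \<mu> (space \<mu>) = measure \<nu> (space \<nu>)" by simp
  show ?case
  proof (rule measure_eqI_PiM_finite[where I="{}" and M="\<lambda>_. borel"])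
    show "finite {}" by simp
    show "sets \<mu> = sets (PiM {} (\<lambda>_. borel))" "sets \<nu> = sets (PiM {} (\<lambda>_. borel))" by fact+
    fix A :: "'i \<Rightarrow> real set"
    show "emeasure \<mu> (Pi\<^sub>E {} A) = emeasure \<nu> (Pi\<^sub>E {} A)"
      using meq sp1 sp2 m1.emeasure_eq_measure m2.emeasure_eq_measure by simp
  next
    show "range (\<lambda>_::nat. \<Pi>\<^sub>E i\<in>{}. space borel) \<subseteq> prod_algebra {} (\<lambda>_. borel)"
      using space_in_prod_algebra[of "{}" "\<lambda>_. borel"] space_in_prod_algebra[of "insert j J" "\<lambda>_. borel"] by auto
    show "(\<Union>i::nat. \<Pi>\<^sub>E i\<in>{}. space borel) = space (PiM {} (\<lambda>_. borel))" by (simp add: space_PiM)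
    show "emeasure \<mu> (\<Pi>\<^sub>E i\<in>{}. space borel) \<noteq> \<infinity>" for i :: nat by simp
  qed
next
  case (insert j J)
  interpret m1: finite_measure \<mu> by fact
  interpret m2: finite_measure \<nu> by fact
  let ?P = "PiM (insert j J) (\<lambda>_. borel) :: ('i \<Rightarrow> real) measure"
  let ?Q = "PiM J (\<lambda>_. borel) :: ('i \<Rightarrow> real) measure"
  have rm: "(\<lambda>x. restrict x J) \<in> measurable ?P ?Q" by (rule measurable_restrict_subset) auto
  show ?case
  proof (rule measure_eqI_PiM_finite[where I="insert j J" and M="\<lambda>_. borel"])
    show "finite (insert j J)" using insert by simp
    show "sets \<mu> = sets ?P" "sets \<nu> = sets ?P" by fact+
    fix E :: "'i \<Rightarrow> real set"
    assume E: "\<And>i. i \<in> insert j J \<Longrightarrow> E i \<in> sets borel"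
    define h where "h = (\<lambda>x::'i\<Rightarrow>real. indicator (E j) (x j) :: real)"
    have hm: "h \<in> borel_measurable ?P" unfolding h_def using E[of j] by measurable
    have h01: "0 \<le> h x \<and> h x \<le> 1" for x by (simp add: h_def indicator_def)
    define r where "r = (\<lambda>m. distr (density m (\<lambda>x. ennreal (h x))) ?Q (\<lambda>x. restrict x J))"
    have rfin: "finite_measure (r m)" if fm: "finite_measure m" and sm: "sets m = sets ?P" for m
    proof -
      have "finite_measure (density m (\<lambda>x. ennreal (h x)))"
        by (rule finite_density_bdd[OF fm meas_tr[OF sm hm] h01])
      moreover have "sets (density m (\<lambda>x. ennreal (h x))) = sets ?P" using sm by simp
      ultimately show ?thesis unfolding r_def
        by (intro finite_measure.finite_measure_distr meas_tr'[OF _ rm]) auto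
    qed
    have rch: "(CLINT x|r m. iexp (\<Sum>i\<in>J. a i * x i)) = (CLINT x|m. indicator (E j) (x j) *\<^sub>R iexp (\<Sum>i\<in>J. a i * x i))"
      if sm: "sets m = sets ?P" for m a
    proof -
      have sd: "sets (density m (\<lambda>x. ennreal (h x))) = sets ?P" using sm by simp
      have "(CLINT x|r m. iexp (\<Sum>i\<in>J. a i * x i)) = (CLINT x|density m (\<lambda>x. ennreal (h x)). iexp (\<Sum>i\<in>J. a i * restrict x J i))"
        unfolding r_def by (rule integral_distr[OF meas_tr'[OF sd rm]]) measurable
      also have "\<dots> = (CLINT x|density m (\<lambda>x. ennreal (h x)). iexp (\<Sum>i\<in>J. a i * x i))"
        by (simp cong: sum.cong)
      also have "\<dots> = (CLINT x|m. h x *\<^sub>R iexp (\<Sum>i\<in>J. a i * x i))"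
      proof (rule integral_density)
        show "(\<lambda>x. iexp (\<Sum>i\<in>J. a i * x i)) \<in> borel_measurable m" by (rule meas_tr[OF sm]) measurable
        show "h \<in> borel_measurable m" by (rule meas_tr[OF sm hm])
        show "AE x in m. 0 \<le> h x" using h01 by simp
      qed
      finally show ?thesis by (simp add: h_def)
    qed
    have "r \<mu> = r \<nu>"
    proof (rule insert.IH)
      show "finite_measure (r \<mu>)" "finite_measure (r \<nu>)" using rfin insert by auto
      show "sets (r \<mu>) = sets ?Q" "sets (r \<nu>) = sets ?Q" by (simp_all add: r_def)
      fix a
      show "(CLINT x|r \<mu>. iexp (\<Sum>i\<in>J. a i * x i)) = (CLINT x|r \<nu>. iexp (\<Sum>i\<in>J. a i * x i))"
        unfolding rch[OF insert.prems(3)] rch[OF insert.prems(4)]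
        by (rule CW_core[OF insert.hyps(1,2) insert.prems E[of j]]) simp
    qed
    have rem: "emeasure (r m) (Pi\<^sub>E J E) = emeasure m (Pi\<^sub>E (insert j J) E)" if sm: "sets m = sets ?P" for m
    proof -
      have sd: "sets (density m (\<lambda>x. ennreal (h x))) = sets ?P" using sm by simp
      have PJ: "Pi\<^sub>E J E \<in> sets ?Q" using E insert.hyps(1) by (intro sets_PiM_I_finite) auto
      have PJ': "Pi\<^sub>E (insert j J) E \<in> sets m" unfolding sm using E insert.hyps(1) by (intro sets_PiM_I_finite) auto
      have spm: "space m = space ?P" using sets_eq_imp_space_eq[OF sm] .
      have pre: "(\<lambda>x. restrict x J) -` Pi\<^sub>E J E \<inter> space m \<in> sets m"
        using measurable_sets[OF meas_tr'[OF sm rm] PJ] .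
      have "emeasure (r m) (Pi\<^sub>E J E) = emeasure (density m (\<lambda>x. ennreal (h x))) ((\<lambda>x. restrict x J) -` Pi\<^sub>E J E \<inter> space m)"
        unfolding r_def by (subst emeasure_distr[OF meas_tr'[OF sd rm] PJ]) simp
      also have "\<dots> = (\<integral>\<^sup>+x. ennreal (h x) * indicator ((\<lambda>x. restrict x J) -` Pi\<^sub>E J E \<inter> space m) x \<partial>m)"
        by (rule emeasure_density[OF _ pre]) (use meas_tr[OF sm hm] in simp)
      also have "\<dots> = (\<integral>\<^sup>+x. indicator (Pi\<^sub>E (insert j J) E) x \<partial>m)"
      proof (rule nn_integral_cong)
        fix x assume "x \<in> space m"
        then have x: "x \<in> space ?P" using spm by simp
        then show "ennreal (h x) * indicator ((\<lambda>x. restrict x J) -` Pi\<^sub>E J E \<inter> space m) x = indicator (Pi\<^sub>E (insert j J) E) x"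
          using spm by (auto simp: h_def indicator_def space_PiM PiE_iff)
      qed
      also have "\<dots> = emeasure m (Pi\<^sub>E (insert j J) E)" using PJ' by simp
      finally show ?thesis .
    qed
    show "emeasure \<mu> (Pi\<^sub>E (insert j J) E) = emeasure \<nu> (Pi\<^sub>E (insert j J) E)"
      using rem[OF insert.prems(3)] rem[OF insert.prems(4)] \<open>r \<mu> = r \<nu>\<close> by simp
  next
    show "range (\<lambda>_::nat. \<Pi>\<^sub>E i\<in>insert j J. space borel) \<subseteq> prod_algebra (insert j J) (\<lambda>_. borel)"
      using space_in_prod_algebra[of "{}" "\<lambda>_. borel"] space_in_prod_algebra[of "insert j J" "\<lambda>_. borel"] by auto
    show "(\<Union>i::nat. \<Pi>\<^sub>E i\<in>insert j J. space borel) = space ?P" by (simp add: space_PiM)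
    show "emeasure \<mu> (\<Pi>\<^sub>E i\<in>insert j J. space borel) \<noteq> \<infinity>" for i :: nat by simp
  qed
qed

definition rsum :: "nat \<Rightarrow> real \<Rightarrow> real \<Rightarrow> (real \<Rightarrow> real) \<Rightarrow> real" where
  "rsum N u v f = (v - u) / real N * (\<Sum>k=1..N. f (u + real k * (v - u) / real N))"

lemma grid_in:
  assumes "u \<le> v" "k \<le> N" "N > 0"
  shows "u + real k * (v - u) / real N \<in> {u..v}"
proof -
  have "real k * (v - u) / real N \<le> (v - u)"
    using assms by (simp add: divide_le_eq mult_right_mono mult.commute)
  moreover have "0 \<le> real k * (v - u) / real N" using assms by simp
  ultimately show ?thesis by simp
qed

lemma integral_split_sum:
  fixes f :: "real \<Rightarrow> real"
  assumes uv: "u \<le> v" and int: "f integrable_on {u..v}" and N: "N > 0"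
  shows "n \<le> N \<Longrightarrow> integral {u..u + real n * (v-u)/N} f =
     (\<Sum>k=1..n. integral {u + real (k-1) * (v-u)/N .. u + real k * (v-u)/N} f)"
proof (induction n)
  case 0
  then show ?case by simp
next
  case (Suc n)
  let ?x = "\<lambda>k::nat. u + real k * (v-u)/N"
  have h0: "0 \<le> (v - u) / N" using uv by simp
  have mono: "?x n \<le> ?x (Suc n)" using h0 by (simp add: add_divide_distrib distrib_right)
  have "0 \<le> real n * (v - u) / real N" using uv by (intro divide_nonneg_nonneg mult_nonneg_nonneg) auto
  then have lo: "u \<le> ?x n" by simp
  have xs: "?x (Suc n) \<in> {u..v}" by (rule grid_in[OF uv Suc.prems N])
  have "f integrable_on {u..?x (Suc n)}" using int by (rule integrable_on_subinterval) (use xs in auto)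
  then have "integral {u..?x n} f + integral {?x n..?x (Suc n)} f = integral {u..?x (Suc n)} f"
    by (rule Henstock_Kurzweil_Integration.integral_combine[OF lo mono])
  then show ?case using Suc by simp
qed

lemma riemann_mod:
  fixes f :: "real \<Rightarrow> real"
  assumes uv: "u \<le> v" and int: "f integrable_on {u..v}" and N: "N > 0" and e: "e \<ge> 0"
    and md: "\<And>x y. x \<in> {u..v} \<Longrightarrow> y \<in> {u..v} \<Longrightarrow> \<bar>x - y\<bar> \<le> (v-u)/N \<Longrightarrow> \<bar>f x - f y\<bar> \<le> e"
  shows "\<bar>rsum N u v f - integral {u..v} f\<bar> \<le> e * (v - u)"
proof -
  define h where "h = (v - u) / N"
  define x where "x = (\<lambda>k::nat. u + real k * (v-u)/N)"
  have h0: "0 \<le> h" using uv by (simp add: h_def)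
  have xN: "x N = v" using N by (simp add: x_def)
  have xS: "x k = x (k - 1) + h" if "k \<ge> 1" for k
    using that by (simp add: x_def h_def of_nat_diff add_divide_distrib left_diff_distrib diff_divide_distrib)
  have xin: "x k \<in> {u..v}" if "k \<le> N" for k unfolding x_def by (rule grid_in[OF uv that N])
  have I: "integral {u..v} f = (\<Sum>k=1..N. integral {x (k-1)..x k} f)"
    using integral_split_sum[OF uv int N order_refl] xN by (simp add: x_def)
  have R: "rsum N u v f = (\<Sum>k=1..N. h * f (x k))"
    by (simp add: rsum_def sum_distrib_left h_def x_def)
  have piece: "\<bar>h * f (x k) - integral {x (k-1)..x k} f\<bar> \<le> e * h" if k: "k \<in> {1..N}" for k
  proof -
    have k1: "k \<ge> 1" "k \<le> N" "k - 1 \<le> N" using k by auto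
    have sub: "{x (k-1)..x k} \<subseteq> {u..v}" using xin[OF k1(2)] xin[OF k1(3)] by auto
    have fi: "f integrable_on {x (k-1)..x k}" using int sub by (rule integrable_on_subinterval)
    have "((\<lambda>y. f (x k) - f y) has_integral (h * f (x k) - integral {x (k-1)..x k} f)) {x (k-1)..x k}"
    proof -
      have "((\<lambda>y. f (x k)) has_integral (Henstock_Kurzweil_Integration.content {x (k-1)..x k} *\<^sub>R f (x k))) {x (k-1)..x k}"
        by (rule has_integral_const_real)
      then have "((\<lambda>y. f (x k)) has_integral (h * f (x k))) {x (k-1)..x k}"
        using xS[OF k1(1)] h0 by simp
      then show ?thesis using has_integral_diff[OF _ integrable_integral[OF fi]] by blast
    qed
    moreover have "norm (f (x k) - f y) \<le> e" if "y \<in> {x (k-1)..x k} - {}" for y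
    proof -
      have "y \<in> {u..v}" using that sub by auto
      moreover have "\<bar>x k - y\<bar> \<le> (v-u)/N" using that xS[OF k1(1)] by (auto simp: h_def)
      ultimately show ?thesis using md[OF xin[OF k1(2)]] by simp
    qed
    ultimately have "norm (h * f (x k) - integral {x (k-1)..x k} f) \<le> e * Henstock_Kurzweil_Integration.content {x (k-1)..x k}"
      by (intro has_integral_bound_real[OF e finite.emptyI]) auto
    then show ?thesis using xS[OF k1(1)] h0 by simp
  qed
  have "\<bar>rsum N u v f - integral {u..v} f\<bar> = \<bar>\<Sum>k=1..N. (h * f (x k) - integral {x (k-1)..x k} f)\<bar>"
    by (simp add: R I sum_subtractf)
  also have "\<dots> \<le> (\<Sum>k=1..N. \<bar>h * f (x k) - integral {x (k-1)..x k} f\<bar>)" by (rule sum_abs)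
  also have "\<dots> \<le> (\<Sum>k=1..N. e * h)" by (rule sum_mono[OF piece])
  also have "\<dots> = e * (v - u)" using N by (simp add: h_def)
  finally show ?thesis .
qed

lemma riemann_tendsto:
  fixes f :: "real \<Rightarrow> real"
  assumes uv: "u \<le> v" and cont: "continuous_on {u..v} f"
  shows "(\<lambda>N. rsum N u v f) \<longlonglongrightarrow> integral {u..v} f"
proof (rule LIMSEQ_I)
  fix r :: real assume r: "r > 0"
  define e where "e = r / (v - u + 1)"
  have e: "e > 0" using r uv by (simp add: e_def)
  have "uniformly_continuous_on {u..v} f" by (rule compact_uniformly_continuous[OF cont compact_Icc])
  then obtain d where d: "d > 0" and dd: "\<And>x x'. x \<in> {u..v} \<Longrightarrow> x' \<in> {u..v} \<Longrightarrow> dist x' x < d \<Longrightarrow> dist (f x') (f x) < e"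
    unfolding uniformly_continuous_on_def using e by metis
  obtain n0 :: nat where n0: "(v - u) / d < real n0" using reals_Archimedean2 by blast
  have int: "f integrable_on {u..v}" using cont by (rule integrable_continuous_real)
  show "\<exists>no. \<forall>n\<ge>no. norm (rsum n u v f - integral {u..v} f) < r"
  proof (intro exI allI impI)
    fix n assume n: "n \<ge> Suc n0"
    then have npos: "n > 0" by simp
    have "(v - u) / d < real n" using n0 n by linarith
    then have hd: "(v - u) / real n < d" using d npos by (simp add: divide_less_eq mult.commute)
    have "\<bar>rsum n u v f - integral {u..v} f\<bar> \<le> e * (v - u)"
    proof (rule riemann_mod[OF uv int npos less_imp_le[OF e]])
      fix x y assume "x \<in> {u..v}" "y \<in> {u..v}" "\<bar>x - y\<bar> \<le> (v - u) / real n"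
      then show "\<bar>f x - f y\<bar> \<le> e" using dd[of y x] hd by (simp add: dist_real_def)
    qed
    also have "e * (v - u) < r"
      using r uv by (simp add: e_def field_simps)
    finally show "norm (rsum n u v f - integral {u..v} f) < r" by simp
  qed
qed

lemma rsum_diff_bound:
  assumes uv: "u \<le> v" and B: "B \<ge> 0" and b: "\<And>x. x \<in> {u..v} \<Longrightarrow> \<bar>g1 x - g2 x\<bar> \<le> B"
  shows "\<bar>rsum N u v g1 - rsum N u v g2\<bar> \<le> (v - u) * B"
proof (cases "N = 0")
  case True then show ?thesis using uv B by (simp add: rsum_def)
next
  case False
  then have N: "N > 0" by simp
  have "rsum N u v g1 - rsum N u v g2 = (v-u)/N * (\<Sum>k=1..N. (g1 (u + real k * (v - u) / real N) - g2 (u + real k * (v - u) / real N)))"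
    by (simp only: rsum_def right_diff_distrib[symmetric] sum_subtractf)
  then have "\<bar>rsum N u v g1 - rsum N u v g2\<bar> = (v-u)/N * \<bar>\<Sum>k=1..N. (g1 (u + real k * (v - u) / real N) - g2 (u + real k * (v - u) / real N))\<bar>"
    using uv by (simp add: abs_mult)
  also have "\<dots> \<le> (v-u)/N * (\<Sum>k=1..N. B)"
    using uv
    by (intro mult_left_mono order.trans[OF sum_abs] sum_mono b grid_in[OF uv _ N]) auto
  also have "\<dots> = (v - u) * B" using N by simp
  finally show ?thesis .
qed

definition Kb :: "real \<Rightarrow> real \<Rightarrow> real" where "Kb s t = min s t - s * t"
definition kap :: "real \<Rightarrow> real \<Rightarrow> real \<Rightarrow> real" where "kap u v s = integral {u..v} (\<lambda>r. Kb s r)"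
definition lam :: "real \<Rightarrow> real \<Rightarrow> real \<Rightarrow> real \<Rightarrow> real" where "lam u v u' v' = integral {u..v} (kap u' v')"

lemma Kb_sym: "Kb s t = Kb t s" by (simp add: Kb_def min.commute mult.commute)

lemma Kb_cont: "continuous_on S (\<lambda>r. Kb s r)" unfolding Kb_def by (intro continuous_intros)

lemma Kb_lip: assumes "s \<in> {0..1}" shows "\<bar>Kb s x - Kb s y\<bar> \<le> 2 * \<bar>x - y\<bar>"
proof -
  have a: "\<bar>min s x - min s y\<bar> \<le> \<bar>x - y\<bar>" by (auto simp: min_def)
  have "\<bar>s * x - s * y\<bar> = \<bar>s\<bar> * \<bar>x - y\<bar>" by (simp add: abs_mult right_diff_distrib[symmetric])
  also have "\<dots> \<le> \<bar>x - y\<bar>" using assms by (intro mult_left_le_one_le) auto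
  finally have b: "\<bar>s * x - s * y\<bar> \<le> \<bar>x - y\<bar>" .
  have c: "Kb s x - Kb s y = (min s x - min s y) - (s * x - s * y)" by (simp add: Kb_def)
  have "\<bar>Kb s x - Kb s y\<bar> \<le> \<bar>min s x - min s y\<bar> + \<bar>s * x - s * y\<bar>" unfolding c by (rule abs_triangle_ineq4)
  then show ?thesis using a b by linarith
qed

lemma kap_lip:
  assumes "u' \<le> v'" "s \<in> {0..1}" "s' \<in> {0..1}" "0 \<le> u'" "v' \<le> 1"
  shows "\<bar>kap u' v' s - kap u' v' s'\<bar> \<le> 2 * \<bar>s - s'\<bar> * (v' - u')"
proof -
  have i1: "(\<lambda>r. Kb s r) integrable_on {u'..v'}" by (rule integrable_continuous_real[OF Kb_cont])
  have i2: "(\<lambda>r. Kb s' r) integrable_on {u'..v'}" by (rule integrable_continuous_real[OF Kb_cont])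
  have "((\<lambda>r. Kb s r - Kb s' r) has_integral (kap u' v' s - kap u' v' s')) {u'..v'}"
    unfolding kap_def by (rule has_integral_diff[OF integrable_integral[OF i1] integrable_integral[OF i2]])
  moreover have "norm (Kb s r - Kb s' r) \<le> 2 * \<bar>s - s'\<bar>" if "r \<in> {u'..v'} - {}" for r
  proof -
    have "r \<in> {0..1}" using that assms by auto
    then have "\<bar>Kb r s - Kb r s'\<bar> \<le> 2 * \<bar>s - s'\<bar>" by (rule Kb_lip)
    then show ?thesis by (simp add: Kb_sym[of s r] Kb_sym[of s' r])
  qed
  ultimately have "norm (kap u' v' s - kap u' v' s') \<le> 2 * \<bar>s - s'\<bar> * Henstock_Kurzweil_Integration.content {u'..v'}"
    by (intro has_integral_bound_real[OF _ finite.emptyI]) auto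
  then show ?thesis using assms by simp
qed

lemma kap_cont:
  assumes "u' \<le> v'" "0 \<le> u'" "v' \<le> 1" shows "continuous_on {0..1} (kap u' v')"
proof (clarsimp simp: continuous_on_iff)
  fix x e :: real assume x: "0 \<le> x" "x \<le> 1" and e: "0 < e"
  define d where "d = e / (2 * (v' - u') + 1)"
  have d: "d > 0" using e assms by (simp add: d_def)
  show "\<exists>d>0. \<forall>x'\<in>{0..1}. dist x' x < d \<longrightarrow> dist (kap u' v' x') (kap u' v' x) < e"
  proof (intro exI[of _ d] conjI ballI impI d)
    fix x' :: real assume x': "x' \<in> {0..1}" and dx: "dist x' x < d"
    have "\<bar>kap u' v' x' - kap u' v' x\<bar> \<le> 2 * \<bar>x' - x\<bar> * (v' - u')"
      using kap_lip[OF assms(1) x' _ assms(2,3), of x] x by simp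
    also have "\<dots> \<le> 2 * d * (v' - u')" using dx assms(1) by (intro mult_right_mono mult_left_mono) (auto simp: dist_real_def)
    also have "\<dots> < e"
    proof -
      have "2 * d * (v' - u') = e * (2 * (v' - u')) / (2 * (v' - u') + 1)" by (simp add: d_def)
      also have "\<dots> < e" using e assms(1) by (simp add: divide_less_eq)
      finally show ?thesis .
    qed
    finally show "dist (kap u' v' x') (kap u' v' x) < e" by (simp add: dist_real_def)
  qed
qed

lemma kap_tendsto:
  assumes "u' \<le> v'"
  shows "(\<lambda>N. rsum N u' v' (\<lambda>r. Kb s r)) \<longlonglongrightarrow> kap u' v' s"
  unfolding kap_def by (rule riemann_tendsto[OF assms Kb_cont])

lemma dbl_tendsto:
  assumes uv: "0 \<le> u" "u \<le> v" "v \<le> 1" and uv': "u' \<le> v'" "0 \<le> u'" "v' \<le> 1"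
  shows "(\<lambda>N. rsum N u v (\<lambda>s. rsum N u' v' (\<lambda>r. Kb s r))) \<longlonglongrightarrow> lam u v u' v'"
proof -
  define C where "C = (v - u) * (2 * (v' - u') * (v' - u'))"
  have bnd: "norm (rsum N u v (\<lambda>s. rsum N u' v' (\<lambda>r. Kb s r)) - rsum N u v (kap u' v')) \<le> C * inverse (real N)"
    if N: "N > 0" for N
  proof -
    have inner: "\<bar>rsum N u' v' (\<lambda>r. Kb s r) - kap u' v' s\<bar> \<le> 2 * (v' - u') / N * (v' - u')" if s: "s \<in> {u..v}" for s
      unfolding kap_def
    proof (rule riemann_mod[OF uv'(1) integrable_continuous_real[OF Kb_cont] N])
      show "0 \<le> 2 * (v' - u') / real N" using uv'(1) by simp
      fix x y assume h: "\<bar>x - y\<bar> \<le> (v' - u') / real N"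
      have h2: "2 * \<bar>x - y\<bar> \<le> 2 * ((v' - u') / real N)" using mult_left_mono[OF h, of 2] by linarith
      have "\<bar>Kb s x - Kb s y\<bar> \<le> 2 * \<bar>x - y\<bar>" using Kb_lip[of s x y] s uv by auto
      then have "\<bar>Kb s x - Kb s y\<bar> \<le> 2 * ((v' - u') / real N)" using h2 by linarith
      then show "\<bar>Kb s x - Kb s y\<bar> \<le> 2 * (v' - u') / real N" by simp
    qed
    have "\<bar>rsum N u v (\<lambda>s. rsum N u' v' (\<lambda>r. Kb s r)) - rsum N u v (kap u' v')\<bar> \<le> (v - u) * (2 * (v' - u') / N * (v' - u'))"
      by (rule rsum_diff_bound[OF uv(2) _ inner]) (use uv'(1) in simp)
    then show ?thesis by (simp add: C_def field_simps)
  qed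
  have z: "(\<lambda>N. rsum N u v (\<lambda>s. rsum N u' v' (\<lambda>r. Kb s r)) - rsum N u v (kap u' v')) \<longlonglongrightarrow> 0"
  proof (rule Lim_null_comparison)
    show "\<forall>\<^sub>F N in sequentially. norm (rsum N u v (\<lambda>s. rsum N u' v' (\<lambda>r. Kb s r)) - rsum N u v (kap u' v')) \<le> C * inverse (real N)"
      using bnd eventually_sequentially[of "\<lambda>N. N > 0"] by (metis (mono_tags, lifting) eventually_mono eventually_gt_at_top)
    show "(\<lambda>N. C * inverse (real N)) \<longlonglongrightarrow> 0"
      by (rule tendsto_mult_right_zero[OF lim_inverse_n])
  qed
  have r: "(\<lambda>N. rsum N u v (kap u' v')) \<longlonglongrightarrow> lam u v u' v'"
    unfolding lam_def
    by (rule riemann_tendsto[OF uv(2) continuous_on_subset[OF kap_cont[OF uv']]]) (use uv in auto)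
  show ?thesis using tendsto_add[OF z r] by simp
qed

lemma rsum_swap_K:
  "rsum N u v (\<lambda>s. rsum N u' v' (\<lambda>r. Kb s r)) = rsum N u' v' (\<lambda>s. rsum N u v (\<lambda>r. Kb s r))"
proof -
  define x where "x = (\<lambda>k::nat. u + real k * (v - u) / real N)"
  define y where "y = (\<lambda>k::nat. u' + real k * (v' - u') / real N)"
  have sw: "(\<Sum>k=1..N. \<Sum>k'=1..N. Kb (x k) (y k')) = (\<Sum>k'=1..N. \<Sum>k=1..N. Kb (y k') (x k))"
    by (rule sum.swap[THEN trans], intro sum.cong refl, rule Kb_sym)
  have "rsum N u v (\<lambda>s. rsum N u' v' (\<lambda>r. Kb s r)) = (v - u) / real N * ((v' - u') / real N * (\<Sum>k=1..N. \<Sum>k'=1..N. Kb (x k) (y k')))"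
    unfolding rsum_def x_def y_def by (simp only: sum_distrib_left)
  also have "\<dots> = (v' - u') / real N * ((v - u) / real N * (\<Sum>k'=1..N. \<Sum>k=1..N. Kb (y k') (x k)))"
    unfolding sw by (simp only: mult.left_commute)
  also have "\<dots> = rsum N u' v' (\<lambda>s. rsum N u v (\<lambda>r. Kb s r))"
    unfolding rsum_def x_def y_def by (simp only: sum_distrib_left)
  finally show ?thesis .
qed

lemma lam_sym:
  assumes "0 \<le> u" "u \<le> v" "v \<le> 1" "0 \<le> u'" "u' \<le> v'" "v' \<le> 1"
  shows "lam u v u' v' = lam u' v' u v"
proof -
  have e: "(\<lambda>N. rsum N u v (\<lambda>s. rsum N u' v' (\<lambda>r. Kb s r))) = (\<lambda>N. rsum N u' v' (\<lambda>s. rsum N u v (\<lambda>r. Kb s r)))"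
    by (rule ext, rule rsum_swap_K)
  have "(\<lambda>N. rsum N u v (\<lambda>s. rsum N u' v' (\<lambda>r. Kb s r))) \<longlonglongrightarrow> lam u' v' u v"
    unfolding e by (rule dbl_tendsto) (use assms in auto)
  then show ?thesis using dbl_tendsto[of u v u' v'] assms LIMSEQ_unique by blast
qed

lemma bb_prob: "brownian_bridge M \<beta> \<Longrightarrow> prob_space M"
  unfolding brownian_bridge_def by blast
lemma bb_meas: "brownian_bridge M \<beta> \<Longrightarrow> t \<in> {0..1} \<Longrightarrow> \<beta> t \<in> borel_measurable M"
  unfolding brownian_bridge_def by blast
lemma bb_cont: "brownian_bridge M \<beta> \<Longrightarrow> \<omega> \<in> space M \<Longrightarrow> continuous_on {0..1} (\<lambda>t. \<beta> t \<omega>)"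
  unfolding brownian_bridge_def by blast
lemma bb_char: "brownian_bridge M \<beta> \<Longrightarrow> finite I \<Longrightarrow> I \<subseteq> {0..1} \<Longrightarrow>
   char (distr M borel (\<lambda>\<omega>. \<Sum>t\<in>I. a t * \<beta> t \<omega>)) u =
           complex_of_real (exp (- (u\<^sup>2 * (\<Sum>s\<in>I. \<Sum>t\<in>I. a s * a t * (min s t - s * t))) / 2))"
  unfolding brownian_bridge_def by blast

lemma sum_group:
  assumes "finite A"
  shows "(\<Sum>i\<in>A. a i * g (\<tau> i)) = (\<Sum>t\<in>\<tau>`A. (\<Sum>i\<in>{i\<in>A. \<tau> i = t}. a i) * (g t :: real))"
proof -
  have "(\<Sum>i\<in>A. a i * g (\<tau> i)) = (\<Sum>t\<in>\<tau>`A. \<Sum>i\<in>{x\<in>A. \<tau> x = t}. a i * g (\<tau> i))"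
    by (rule sum.image_gen[OF assms])
  also have "\<dots> = (\<Sum>t\<in>\<tau>`A. \<Sum>i\<in>{x\<in>A. \<tau> x = t}. a i * g t)" by (intro sum.cong refl) auto
  also have "\<dots> = (\<Sum>t\<in>\<tau>`A. (\<Sum>i\<in>{i\<in>A. \<tau> i = t}. a i) * g t)" by (simp add: sum_distrib_right)
  finally show ?thesis .
qed

lemma G1:
  fixes \<beta> :: "real \<Rightarrow> 'a \<Rightarrow> real" and \<tau> :: "'i \<Rightarrow> real"
  assumes bb: "brownian_bridge M \<beta>" and fin: "finite A" and tau: "\<And>i. i \<in> A \<Longrightarrow> \<tau> i \<in> {0..1}"
  shows "(CLINT \<omega>|M. iexp (\<Sum>i\<in>A. a i * \<beta> (\<tau> i) \<omega>)) =
    complex_of_real (exp (- (\<Sum>i\<in>A. \<Sum>j\<in>A. a i * a j * Kb (\<tau> i) (\<tau> j)) / 2))"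
proof -
  define I where "I = \<tau> ` A"
  define c where "c = (\<lambda>t. \<Sum>i\<in>{i\<in>A. \<tau> i = t}. a i)"
  have I: "finite I" "I \<subseteq> {0..1}" using fin tau by (auto simp: I_def)
  have F: "(\<Sum>t\<in>I. c t * \<beta> t \<omega>) = (\<Sum>i\<in>A. a i * \<beta> (\<tau> i) \<omega>)" for \<omega>
    unfolding I_def c_def by (rule sum_group[OF fin, symmetric])
  have Q: "(\<Sum>s\<in>I. \<Sum>t\<in>I. c s * c t * (min s t - s * t)) = (\<Sum>i\<in>A. \<Sum>j\<in>A. a i * a j * Kb (\<tau> i) (\<tau> j))"
  proof -
    have "(\<Sum>s\<in>I. \<Sum>t\<in>I. c s * c t * (min s t - s * t)) = (\<Sum>s\<in>I. c s * (\<Sum>t\<in>I. c t * Kb s t))"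
      by (simp add: Kb_def sum_distrib_left mult.assoc)
    also have "\<dots> = (\<Sum>s\<in>I. c s * (\<Sum>j\<in>A. a j * Kb s (\<tau> j)))"
      unfolding I_def c_def by (simp only: sum_group[OF fin, of a "\<lambda>t. Kb _ t", symmetric])
    also have "\<dots> = (\<Sum>i\<in>A. a i * (\<Sum>j\<in>A. a j * Kb (\<tau> i) (\<tau> j)))"
      unfolding I_def c_def by (rule sum_group[OF fin, symmetric])
    also have "\<dots> = (\<Sum>i\<in>A. \<Sum>j\<in>A. a i * a j * Kb (\<tau> i) (\<tau> j))"
      by (simp add: sum_distrib_left mult.assoc)
    finally show ?thesis .
  qed
  have mF: "(\<lambda>\<omega>. \<Sum>t\<in>I. c t * \<beta> t \<omega>) \<in> borel_measurable M"
    using I bb_meas[OF bb] by (intro borel_measurable_sum borel_measurable_times borel_measurable_const) auto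
  have "(CLINT \<omega>|M. iexp (\<Sum>i\<in>A. a i * \<beta> (\<tau> i) \<omega>)) = char (distr M borel (\<lambda>\<omega>. \<Sum>t\<in>I. c t * \<beta> t \<omega>)) 1"
    unfolding char_def by (subst integral_distr[OF mF]) (auto simp: F)
  also have "\<dots> = complex_of_real (exp (- (1\<^sup>2 * (\<Sum>s\<in>I. \<Sum>t\<in>I. c s * c t * (min s t - s * t))) / 2))"
    by (rule bb_char[OF bb I])
  finally show ?thesis unfolding Q by simp
qed

lemma dsum_Plus:
  assumes "finite A" "finite C"
  shows "(\<Sum>p\<in>A <+> C. \<Sum>q\<in>A <+> C. T p q) =
    (\<Sum>i\<in>A. \<Sum>j\<in>A. T (Inl i) (Inl j)) + (\<Sum>i\<in>A. \<Sum>c\<in>C. T (Inl i) (Inr c))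
    + (\<Sum>c\<in>C. \<Sum>j\<in>A. T (Inr c) (Inl j)) + (\<Sum>c\<in>C. \<Sum>c'\<in>C. (T (Inr c) (Inr c') :: real))"
  using assms by (simp add: sum.Plus sum.distrib o_def)

lemma sum_BN:
  assumes "finite B"
  shows "(\<Sum>p\<in>B \<times> {1..N}. F (fst p) (snd p)) = (\<Sum>m\<in>B. \<Sum>k=1..N. (F m k :: real))"
  by (simp add: sum.cartesian_product split_def)

lemma rsum_meas:
  assumes bb: "brownian_bridge M \<beta>" and uv: "0 \<le> u" "u \<le> v" "v \<le> 1"
  shows "(\<lambda>\<omega>. rsum N u v (\<lambda>r. \<beta> r \<omega>)) \<in> borel_measurable M"
  unfolding rsum_def
proof (intro borel_measurable_times borel_measurable_const borel_measurable_sum)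
  fix k assume k: "k \<in> {1..N}"
  then have "u + real k * (v - u) / real N \<in> {u..v}" by (intro grid_in) (use uv in auto)
  then show "\<beta> (u + real k * (v - u) / real N) \<in> borel_measurable M" using uv by (intro bb_meas[OF bb]) auto
qed

lemma GL:
  fixes \<beta> :: "real \<Rightarrow> 'a \<Rightarrow> real" and \<tau> :: "'i \<Rightarrow> real" and lo hi :: "'m \<Rightarrow> real"
  assumes bb: "brownian_bridge M \<beta>" and finA: "finite A" and tau: "\<And>i. i \<in> A \<Longrightarrow> \<tau> i \<in> {0..1}"
    and finB: "finite B" and lohi: "\<And>m. m \<in> B \<Longrightarrow> 0 \<le> lo m \<and> lo m \<le> hi m \<and> hi m \<le> 1"
  shows "(CLINT \<omega>|M. iexp ((\<Sum>i\<in>A. a i * \<beta> (\<tau> i) \<omega>) + (\<Sum>m\<in>B. b m * integral {lo m..hi m} (\<lambda>r. \<beta> r \<omega>)))) =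
    complex_of_real (exp (- ((\<Sum>i\<in>A. \<Sum>j\<in>A. a i * a j * Kb (\<tau> i) (\<tau> j))
       + 2 * (\<Sum>i\<in>A. \<Sum>m\<in>B. a i * b m * kap (lo m) (hi m) (\<tau> i))
       + (\<Sum>m\<in>B. \<Sum>m'\<in>B. b m * b m' * lam (lo m) (hi m) (lo m') (hi m'))) / 2))"
proof -
  interpret prob_space M by (rule bb_prob[OF bb])
  define X where "X = (\<lambda>\<omega>. (\<Sum>i\<in>A. a i * \<beta> (\<tau> i) \<omega>) + (\<Sum>m\<in>B. b m * integral {lo m..hi m} (\<lambda>r. \<beta> r \<omega>)))"
  define XN where "XN = (\<lambda>N \<omega>. (\<Sum>i\<in>A. a i * \<beta> (\<tau> i) \<omega>) + (\<Sum>m\<in>B. b m * rsum N (lo m) (hi m) (\<lambda>r. \<beta> r \<omega>)))"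
  define Q where "Q = (\<Sum>i\<in>A. \<Sum>j\<in>A. a i * a j * Kb (\<tau> i) (\<tau> j))
       + 2 * (\<Sum>i\<in>A. \<Sum>m\<in>B. a i * b m * kap (lo m) (hi m) (\<tau> i))
       + (\<Sum>m\<in>B. \<Sum>m'\<in>B. b m * b m' * lam (lo m) (hi m) (lo m') (hi m'))"
  define QN where "QN = (\<lambda>N. (\<Sum>i\<in>A. \<Sum>j\<in>A. a i * a j * Kb (\<tau> i) (\<tau> j))
       + 2 * (\<Sum>i\<in>A. \<Sum>m\<in>B. a i * b m * rsum N (lo m) (hi m) (\<lambda>r. Kb (\<tau> i) r))
       + (\<Sum>m\<in>B. \<Sum>m'\<in>B. b m * b m' * rsum N (lo m) (hi m) (\<lambda>s. rsum N (lo m') (hi m') (\<lambda>r. Kb s r))))"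
  have step1: "(CLINT \<omega>|M. iexp (XN N \<omega>)) = complex_of_real (exp (- QN N / 2))" for N
  proof -
    define C where "C = B \<times> {1..N}"
    define xg where "xg = (\<lambda>m k. lo m + real k * (hi m - lo m) / real N)"
    define hh where "hh = (\<lambda>m. (hi m - lo m) / real N)"
    define \<tau>' where "\<tau>' = case_sum \<tau> (\<lambda>p. xg (fst p) (snd p))"
    define a' where "a' = case_sum a (\<lambda>p::'m \<times> nat. b (fst p) * hh (fst p))"
    have finC: "finite C" using finB by (simp add: C_def)
    have tau': "\<tau>' p \<in> {0..1}" if "p \<in> A <+> C" for p
    proof (cases p)
      case (Inl i) then show ?thesis using that tau by (auto simp: \<tau>'_def)
    next
      case (Inr c)
      then have c: "fst c \<in> B" "snd c \<le> N" "snd c \<ge> 1" using that by (auto simp: C_def)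
      then have "N > 0" by simp
      then have "xg (fst c) (snd c) \<in> {lo (fst c)..hi (fst c)}" unfolding xg_def
        by (rule grid_in[rotated 2]) (use lohi[OF c(1)] c in auto)
      then show ?thesis using Inr lohi[OF c(1)] by (auto simp: \<tau>'_def)
    qed
    have XNe: "(\<Sum>p\<in>A <+> C. a' p * \<beta> (\<tau>' p) \<omega>) = XN N \<omega>" for \<omega>
    proof -
      have "(\<Sum>p\<in>A <+> C. a' p * \<beta> (\<tau>' p) \<omega>) = (\<Sum>i\<in>A. a i * \<beta> (\<tau> i) \<omega>) + (\<Sum>p\<in>C. b (fst p) * hh (fst p) * \<beta> (xg (fst p) (snd p)) \<omega>)"
        using finA finC by (simp add: sum.Plus a'_def \<tau>'_def o_def)
      also have "(\<Sum>p\<in>C. b (fst p) * hh (fst p) * \<beta> (xg (fst p) (snd p)) \<omega>) = (\<Sum>m\<in>B. \<Sum>k=1..N. b m * hh m * \<beta> (xg m k) \<omega>)"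
        unfolding C_def by (rule sum_BN[OF finB])
      also have "\<dots> = (\<Sum>m\<in>B. b m * rsum N (lo m) (hi m) (\<lambda>r. \<beta> r \<omega>))"
        by (simp add: rsum_def xg_def hh_def sum_distrib_left mult.assoc)
      finally show ?thesis by (simp add: XN_def)
    qed
    define T where "T = (\<lambda>p q. a' p * a' q * Kb (\<tau>' p) (\<tau>' q))"
    have Tsym: "T p q = T q p" for p q by (simp add: T_def Kb_sym mult_ac)
    have QNe: "(\<Sum>p\<in>A <+> C. \<Sum>q\<in>A <+> C. T p q) = QN N"
    proof -
      have swap: "(\<Sum>c\<in>C. \<Sum>j\<in>A. T (Inr c) (Inl j)) = (\<Sum>i\<in>A. \<Sum>c\<in>C. T (Inl i) (Inr c))"
        by (subst sum.swap) (simp add: Tsym)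
      have mid: "(\<Sum>i\<in>A. \<Sum>c\<in>C. T (Inl i) (Inr c)) = (\<Sum>i\<in>A. \<Sum>m\<in>B. a i * b m * rsum N (lo m) (hi m) (\<lambda>r. Kb (\<tau> i) r))"
      proof (rule sum.cong[OF refl])
        fix i assume "i \<in> A"
        have "(\<Sum>c\<in>C. T (Inl i) (Inr c)) = (\<Sum>m\<in>B. \<Sum>k=1..N. a i * (b m * hh m) * Kb (\<tau> i) (xg m k))"
          unfolding C_def T_def a'_def \<tau>'_def using sum_BN[OF finB, of "\<lambda>m k. a i * (b m * hh m) * Kb (\<tau> i) (xg m k)" N]
          by simp
        also have "\<dots> = (\<Sum>m\<in>B. a i * b m * rsum N (lo m) (hi m) (\<lambda>r. Kb (\<tau> i) r))"
          by (simp add: rsum_def xg_def hh_def sum_distrib_left mult_ac)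
        finally show "(\<Sum>c\<in>C. T (Inl i) (Inr c)) = (\<Sum>m\<in>B. a i * b m * rsum N (lo m) (hi m) (\<lambda>r. Kb (\<tau> i) r))" .
      qed
      have last: "(\<Sum>c\<in>C. \<Sum>c'\<in>C. T (Inr c) (Inr c')) = (\<Sum>m\<in>B. \<Sum>m'\<in>B. b m * b m' * rsum N (lo m) (hi m) (\<lambda>s. rsum N (lo m') (hi m') (\<lambda>r. Kb s r)))"
      proof -
        have "(\<Sum>c\<in>C. \<Sum>c'\<in>C. T (Inr c) (Inr c')) = (\<Sum>m\<in>B. \<Sum>k=1..N. \<Sum>c'\<in>C. T (Inr (m,k)) (Inr c'))"
          unfolding C_def using sum_BN[OF finB, of "\<lambda>m k. \<Sum>c'\<in>B \<times> {1..N}. T (Inr (m,k)) (Inr c')" N] by simp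
        also have "\<dots> = (\<Sum>m\<in>B. \<Sum>k=1..N. \<Sum>m'\<in>B. \<Sum>k'=1..N. T (Inr (m,k)) (Inr (m',k')))"
          unfolding C_def
        proof (intro sum.cong refl)
          fix m k
          show "(\<Sum>c'\<in>B \<times> {1..N}. T (Inr (m,k)) (Inr c')) = (\<Sum>m'\<in>B. \<Sum>k'=1..N. T (Inr (m,k)) (Inr (m',k')))"
            using sum_BN[OF finB, of "\<lambda>m' k'. T (Inr (m,k)) (Inr (m',k'))" N] by simp
        qed
        also have "\<dots> = (\<Sum>m\<in>B. \<Sum>m'\<in>B. \<Sum>k=1..N. \<Sum>k'=1..N. T (Inr (m,k)) (Inr (m',k')))"
          by (intro sum.cong refl) (rule sum.swap)
        also have "\<dots> = (\<Sum>m\<in>B. \<Sum>m'\<in>B. b m * b m' * rsum N (lo m) (hi m) (\<lambda>s. rsum N (lo m') (hi m') (\<lambda>r. Kb s r)))"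
          by (simp add: T_def a'_def \<tau>'_def rsum_def xg_def hh_def sum_distrib_left mult_ac)
        finally show ?thesis .
      qed
      have first: "(\<Sum>i\<in>A. \<Sum>j\<in>A. T (Inl i) (Inl j)) = (\<Sum>i\<in>A. \<Sum>j\<in>A. a i * a j * Kb (\<tau> i) (\<tau> j))"
        by (simp add: T_def a'_def \<tau>'_def)
      show ?thesis unfolding dsum_Plus[OF finA finC] swap mid last first QN_def by simp
    qed
    have "(CLINT \<omega>|M. iexp (XN N \<omega>)) = (CLINT \<omega>|M. iexp (\<Sum>p\<in>A <+> C. a' p * \<beta> (\<tau>' p) \<omega>))"
      by (simp add: XNe)
    also have "\<dots> = complex_of_real (exp (- (\<Sum>p\<in>A <+> C. \<Sum>q\<in>A <+> C. a' p * a' q * Kb (\<tau>' p) (\<tau>' q)) / 2))"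
      by (rule G1[OF bb _ tau']) (use finA finC in simp)
    also have "\<dots> = complex_of_real (exp (- QN N / 2))" using QNe by (simp add: T_def)
    finally show ?thesis .
  qed
  have conv: "(\<lambda>N. XN N \<omega>) \<longlonglongrightarrow> X \<omega>" if \<omega>: "\<omega> \<in> space M" for \<omega>
    unfolding XN_def X_def
  proof (intro tendsto_add tendsto_const tendsto_sum tendsto_mult)
    fix m assume m: "m \<in> B"
    show "(\<lambda>N. rsum N (lo m) (hi m) (\<lambda>r. \<beta> r \<omega>)) \<longlonglongrightarrow> integral {lo m..hi m} (\<lambda>r. \<beta> r \<omega>)"
      by (rule riemann_tendsto) (use lohi[OF m] in \<open>auto intro: continuous_on_subset[OF bb_cont[OF bb \<omega>]]\<close>)
  qed
  have mXN: "XN N \<in> borel_measurable M" for N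
    unfolding XN_def using bb_meas[OF bb] tau lohi rsum_meas[OF bb]
    by (intro borel_measurable_add borel_measurable_sum borel_measurable_times borel_measurable_const) auto
  have mX: "X \<in> borel_measurable M"
    by (rule borel_measurable_LIMSEQ_real[OF conv mXN])
  have mi: "(\<lambda>x::real. iexp x) \<in> borel_measurable borel" by measurable
  have lim1: "(\<lambda>N. CLINT \<omega>|M. iexp (XN N \<omega>)) \<longlonglongrightarrow> (CLINT \<omega>|M. iexp (X \<omega>))"
  proof (rule integral_dominated_convergence[where w="\<lambda>_. 1"])
    show "(\<lambda>\<omega>. iexp (X \<omega>)) \<in> borel_measurable M" by (rule measurable_compose[OF mX mi])
    show "(\<lambda>\<omega>. iexp (XN N \<omega>)) \<in> borel_measurable M" for N by (rule measurable_compose[OF mXN mi])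
    show "integrable M (\<lambda>_. 1::real)" by simp
    show "AE \<omega> in M. (\<lambda>N. iexp (XN N \<omega>)) \<longlonglongrightarrow> iexp (X \<omega>)"
      by (rule AE_I2) (intro tendsto_intros conv)
    show "AE \<omega> in M. norm (iexp (XN N \<omega>)) \<le> 1" for N by simp
  qed
  have limQ: "QN \<longlonglongrightarrow> Q"
    unfolding QN_def Q_def
  proof (intro tendsto_add tendsto_const tendsto_mult_left tendsto_sum)
    fix i m assume "i \<in> A" "m \<in> B"
    show "(\<lambda>N. rsum N (lo m) (hi m) (\<lambda>r. Kb (\<tau> i) r)) \<longlonglongrightarrow> kap (lo m) (hi m) (\<tau> i)"
      by (rule kap_tendsto) (use lohi[OF \<open>m \<in> B\<close>] in simp)
  next
    fix m m' assume "m \<in> B" "m' \<in> B"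
    show "(\<lambda>N. rsum N (lo m) (hi m) (\<lambda>s. rsum N (lo m') (hi m') (\<lambda>r. Kb s r))) \<longlonglongrightarrow> lam (lo m) (hi m) (lo m') (hi m')"
      by (rule dbl_tendsto) (use lohi[OF \<open>m \<in> B\<close>] lohi[OF \<open>m' \<in> B\<close>] in auto)
  qed
  have lim2: "(\<lambda>N. complex_of_real (exp (- QN N / 2))) \<longlonglongrightarrow> complex_of_real (exp (- Q / 2))"
    by (intro tendsto_intros limQ) simp
  have "(CLINT \<omega>|M. iexp (X \<omega>)) = complex_of_real (exp (- Q / 2))"
    using lim1 lim2 unfolding step1 by (rule LIMSEQ_unique)
  then show ?thesis by (simp add: X_def Q_def)
qed

lemma int_meas:
  assumes bb: "brownian_bridge M \<beta>" and uv: "0 \<le> u" "u \<le> v" "v \<le> 1"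
  shows "(\<lambda>\<omega>. integral {u..v} (\<lambda>r. \<beta> r \<omega>)) \<in> borel_measurable M"
proof (rule borel_measurable_LIMSEQ_real[OF _ rsum_meas[OF bb uv]])
  fix \<omega> assume "\<omega> \<in> space M"
  then show "(\<lambda>N. rsum N u v (\<lambda>r. \<beta> r \<omega>)) \<longlonglongrightarrow> integral {u..v} (\<lambda>r. \<beta> r \<omega>)"
    by (intro riemann_tendsto uv continuous_on_subset[OF bb_cont[OF bb]]) (use uv in auto)
qed

lemma int_poly:
  fixes a b c0 c1 c2 :: real
  assumes "a \<le> b"
  shows "integral {a..b} (\<lambda>r. c0 + c1 * r + c2 * r^2) = c0 * (b - a) + c1 * (b^2 - a^2) / 2 + c2 * (b^3 - a^3) / 3"
proof -
  define F where "F = (\<lambda>r::real. c0 * r + c1 * r^2 / 2 + c2 * r^3 / 3)"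
  have d: "(F has_vector_derivative (c0 + c1 * x + c2 * x^2)) (at x within {a..b})" for x
  proof -
    have "(F has_real_derivative (c0 + c1 * x + c2 * x^2)) (at x within {a..b})"
      unfolding F_def by (auto intro!: derivative_eq_intros simp: power2_eq_square)
    then show ?thesis by (simp add: has_real_derivative_iff_has_vector_derivative)
  qed
  have "((\<lambda>r. c0 + c1 * r + c2 * r^2) has_integral (F b - F a)) {a..b}"
    by (rule fundamental_theorem_of_calculus[OF assms]) (use d in auto)
  then show ?thesis by (simp add: integral_unique F_def algebra_simps diff_divide_distrib)
qed

lemma Kb_int: "(\<lambda>r. Kb s r) integrable_on {a..b}" by (rule integrable_continuous_real[OF Kb_cont])

lemma kap01: assumes "t \<in> {0..1}" shows "kap 0 1 t = t * (1 - t) / 2"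
proof -
  from assms have t0: "0 \<le> t" "t \<le> 1" by auto
  have "kap 0 1 t = integral {0..t} (\<lambda>r. Kb t r) + integral {t..1} (\<lambda>r. Kb t r)"
    unfolding kap_def using assms by (intro Henstock_Kurzweil_Integration.integral_combine[symmetric] Kb_int) auto
  also have "integral {0..t} (\<lambda>r. Kb t r) = integral {0..t} (\<lambda>r. 0 + (1 - t) * r + 0 * r^2)"
    by (intro integral_cong) (auto simp: Kb_def algebra_simps)
  also have "integral {t..1} (\<lambda>r. Kb t r) = integral {t..1} (\<lambda>r. t + (- t) * r + 0 * r^2)"
    by (intro integral_cong) (auto simp: Kb_def algebra_simps)
  also have "integral {0..t} (\<lambda>r. 0 + (1 - t) * r + 0 * r^2) + integral {t..1} (\<lambda>r. t + (- t) * r + 0 * r^2)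
     = (0 * (t - 0) + (1 - t) * (t^2 - 0^2) / 2 + 0 * (t^3 - 0^3) / 3) + (t * (1 - t) + (- t) * (1^2 - t^2) / 2 + 0 * (1^3 - t^3) / 3)"
    by (simp only: int_poly t0)
  also have "\<dots> = t * (1 - t) / 2" by (simp add: field_simps power2_eq_square)
  finally show ?thesis .
qed

lemma kapM_mid: assumes "t \<in> {1/3..2/3}" shows "kap (1/3) (2/3) t = - 1/18 + t / 2 - t^2 / 2"
proof -
  from assms have t0: "1/3 \<le> t" "t \<le> 2/3" by auto
  have "kap (1/3) (2/3) t = integral {1/3..t} (\<lambda>r. Kb t r) + integral {t..2/3} (\<lambda>r. Kb t r)"
    unfolding kap_def using assms by (intro Henstock_Kurzweil_Integration.integral_combine[symmetric] Kb_int) auto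
  also have "integral {1/3..t} (\<lambda>r. Kb t r) = integral {1/3..t} (\<lambda>r. 0 + (1 - t) * r + 0 * r^2)"
    by (intro integral_cong) (auto simp: Kb_def algebra_simps)
  also have "integral {t..2/3} (\<lambda>r. Kb t r) = integral {t..2/3} (\<lambda>r. t + (- t) * r + 0 * r^2)"
    by (intro integral_cong) (auto simp: Kb_def algebra_simps)
  also have "integral {1/3..t} (\<lambda>r. 0 + (1 - t) * r + 0 * r^2) + integral {t..2/3} (\<lambda>r. t + (- t) * r + 0 * r^2)
     = (0 * (t - 1/3) + (1 - t) * (t^2 - (1/3)^2) / 2 + 0 * (t^3 - (1/3)^3) / 3) + (t * (2/3 - t) + (- t) * ((2/3)^2 - t^2) / 2 + 0 * ((2/3)^3 - t^3) / 3)"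
    by (simp only: int_poly t0)
  also have "\<dots> = - 1/18 + t / 2 - t^2 / 2" by (simp add: field_simps power2_eq_square power3_eq_cube)
  finally show ?thesis .
qed

lemma kapM_lo: assumes "t \<in> {0..1/3}" shows "kap (1/3) (2/3) t = t / 6"
proof -
  have "kap (1/3) (2/3) t = integral {1/3..2/3} (\<lambda>r. t + (- t) * r + 0 * r^2)"
    unfolding kap_def using assms by (intro integral_cong) (auto simp: Kb_def algebra_simps)
  also have "\<dots> = t * (2/3 - 1/3) + (- t) * ((2/3)^2 - (1/3)^2) / 2 + 0 * ((2/3)^3 - (1/3)^3) / 3"
    by (rule int_poly) simp
  also have "\<dots> = t / 6" by (simp add: field_simps power2_eq_square)
  finally show ?thesis .
qed

lemma kapM_hi: assumes "t \<in> {2/3..1}" shows "kap (1/3) (2/3) t = (1 - t) / 6"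
proof -
  have "kap (1/3) (2/3) t = integral {1/3..2/3} (\<lambda>r. 0 + (1 - t) * r + 0 * r^2)"
    unfolding kap_def using assms by (intro integral_cong) (auto simp: Kb_def algebra_simps)
  also have "\<dots> = 0 * (2/3 - 1/3) + (1 - t) * ((2/3)^2 - (1/3)^2) / 2 + 0 * ((2/3)^3 - (1/3)^3) / 3"
    by (rule int_poly) simp
  also have "\<dots> = (1 - t) / 6" by (simp add: field_simps power2_eq_square)
  finally show ?thesis .
qed

lemma lam_SS: "lam 0 1 0 1 = 1/12"
proof -
  have "lam 0 1 0 1 = integral {0..1} (\<lambda>r. 0 + (1/2) * r + (-1/2) * r^2)"
    unfolding lam_def by (intro integral_cong) (auto simp: kap01 power2_eq_square algebra_simps diff_divide_distrib)
  also have "\<dots> = 0 * (1 - 0) + (1/2) * (1^2 - 0^2) / 2 + (-1/2) * (1^3 - 0^3) / 3" by (rule int_poly) simp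
  finally show ?thesis by simp
qed

lemma lam_MS: "lam (1/3) (2/3) 0 1 = 13/324"
proof -
  have "lam (1/3) (2/3) 0 1 = integral {1/3..2/3} (\<lambda>r. 0 + (1/2) * r + (-1/2) * r^2)"
    unfolding lam_def by (intro integral_cong) (auto simp: kap01 power2_eq_square algebra_simps diff_divide_distrib)
  also have "\<dots> = 0 * (2/3 - 1/3) + (1/2) * ((2/3)^2 - (1/3)^2) / 2 + (-1/2) * ((2/3)^3 - (1/3)^3) / 3" by (rule int_poly) simp
  finally show ?thesis by (simp add: power2_eq_square power3_eq_cube)
qed

lemma lam_SM: "lam 0 1 (1/3) (2/3) = 13/324"
  using lam_sym[of 0 1 "1/3" "2/3"] lam_MS by simp

lemma lam_MM: "lam (1/3) (2/3) (1/3) (2/3) = 7/324"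
proof -
  have "lam (1/3) (2/3) (1/3) (2/3) = integral {1/3..2/3} (\<lambda>r. (-1/18) + (1/2) * r + (-1/2) * r^2)"
    unfolding lam_def by (intro integral_cong) (auto simp: kapM_mid)
  also have "\<dots> = (-1/18) * (2/3 - 1/3) + (1/2) * ((2/3)^2 - (1/3)^2) / 2 + (-1/2) * ((2/3)^3 - (1/3)^3) / 3" by (rule int_poly) simp
  finally show ?thesis by (simp add: power2_eq_square power3_eq_cube)
qed

definition Sint :: "(real \<Rightarrow> 'a \<Rightarrow> real) \<Rightarrow> 'a \<Rightarrow> real" where
  "Sint \<beta> \<omega> = integral {0..1} (\<lambda>r. \<beta> r \<omega>)"
definition Mint :: "(real \<Rightarrow> 'a \<Rightarrow> real) \<Rightarrow> 'a \<Rightarrow> real" where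
  "Mint \<beta> \<omega> = integral {1/3..2/3} (\<lambda>r. \<beta> r \<omega>)"
definition Zf :: "(real \<Rightarrow> 'a \<Rightarrow> real) \<Rightarrow> 'a \<Rightarrow> real" where
  "Zf \<beta> \<omega> = Sint \<beta> \<omega> - Mint \<beta> \<omega> + (\<beta> (1/3) \<omega> + \<beta> (2/3) \<omega>) / 6"
definition cZ :: "real \<Rightarrow> real" where
  "cZ t = kap 0 1 t - kap (1/3) (2/3) t + (Kb t (1/3) + Kb t (2/3)) / 6"

lemma GL3:
  fixes \<beta> :: "real \<Rightarrow> 'a \<Rightarrow> real"
  assumes bb: "brownian_bridge M \<beta>" and J: "finite J" "J \<subseteq> {0..1}"
  shows "(CLINT \<omega>|M. iexp ((\<Sum>t\<in>J. a t * \<beta> t \<omega>) + x * Sint \<beta> \<omega> + z * Zf \<beta> \<omega>)) =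
   complex_of_real (exp (- ((\<Sum>s\<in>J. \<Sum>t\<in>J. a s * a t * Kb s t) + 2 * x * (\<Sum>t\<in>J. a t * kap 0 1 t)
      + 2 * z * (\<Sum>t\<in>J. a t * cZ t) + x^2 / 12 + 2 * x * z * (13/162) + z^2 * (13/162)) / 2))"
proof -
  define A where "A = J <+> (UNIV :: bool set)"
  define \<tau> where "\<tau> = case_sum (\<lambda>t. t) (\<lambda>b::bool. if b then 1/3 else (2/3::real))"
  define a' where "a' = case_sum a (\<lambda>b::bool. z / 6)"
  define B where "B = {0::nat, 1}"
  define lo where "lo = (\<lambda>m::nat. if m = 0 then 0 else (1/3::real))"
  define hi where "hi = (\<lambda>m::nat. if m = 0 then 1 else (2/3::real))"
  define b where "b = (\<lambda>m::nat. if m = 0 then x + z else - z)"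
  have finA: "finite A" using J by (simp add: A_def)
  have tau: "\<tau> p \<in> {0..1}" if "p \<in> A" for p using that J by (auto simp: A_def \<tau>_def)
  have lohi: "0 \<le> lo m \<and> lo m \<le> hi m \<and> hi m \<le> 1" if "m \<in> B" for m using that by (auto simp: B_def lo_def hi_def)
  have GLi: "(CLINT \<omega>|M. iexp ((\<Sum>p\<in>A. a' p * \<beta> (\<tau> p) \<omega>) + (\<Sum>m\<in>B. b m * integral {lo m..hi m} (\<lambda>r. \<beta> r \<omega>)))) =
    complex_of_real (exp (- ((\<Sum>p\<in>A. \<Sum>q\<in>A. a' p * a' q * Kb (\<tau> p) (\<tau> q))
       + 2 * (\<Sum>p\<in>A. \<Sum>m\<in>B. a' p * b m * kap (lo m) (hi m) (\<tau> p))
       + (\<Sum>m\<in>B. \<Sum>m'\<in>B. b m * b m' * lam (lo m) (hi m) (lo m') (hi m'))) / 2))"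
    by (rule GL[OF bb finA tau _ lohi]) (simp_all add: B_def)
  have lhs: "(\<Sum>p\<in>A. a' p * \<beta> (\<tau> p) \<omega>) + (\<Sum>m\<in>B. b m * integral {lo m..hi m} (\<lambda>r. \<beta> r \<omega>))
      = (\<Sum>t\<in>J. a t * \<beta> t \<omega>) + x * Sint \<beta> \<omega> + z * Zf \<beta> \<omega>" for \<omega>
    using J by (simp add: A_def sum.Plus UNIV_bool a'_def \<tau>_def B_def lo_def hi_def b_def Sint_def Mint_def Zf_def algebra_simps)
  define p where "p = (\<Sum>s\<in>J. \<Sum>t\<in>J. a s * a t * Kb s t)"
  define \<sigma>1 where "\<sigma>1 = (\<Sum>t\<in>J. a t * kap 0 1 t)"
  define \<sigma>2 where "\<sigma>2 = (\<Sum>t\<in>J. a t * kap (1/3) (2/3) t)"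
  define \<sigma>3 where "\<sigma>3 = (\<Sum>t\<in>J. a t * (Kb t (1/3) + Kb t (2/3)))"
  have Kv: "Kb (1/3) (1/3) = 2/9" "Kb (1/3) (2/3) = 1/9" "Kb (2/3) (1/3) = 1/9" "Kb (2/3) (2/3) = 2/9"
    by (simp_all add: Kb_def min_def)
  have kv: "kap 0 1 (1/3) = 1/9" "kap 0 1 (2/3) = 1/9" "kap (1/3) (2/3) (1/3) = 1/18" "kap (1/3) (2/3) (2/3) = 1/18"
    by (simp_all add: kap01 kapM_lo kapM_hi)
  have T1: "(\<Sum>p\<in>A. \<Sum>q\<in>A. a' p * a' q * Kb (\<tau> p) (\<tau> q)) = p + 2 * (z/6) * \<sigma>3 + z^2 / 54"
  proof -
    have sw: "(\<Sum>c\<in>UNIV. \<Sum>j\<in>J. a' (Inr c) * a' (Inl j) * Kb (\<tau> (Inr c)) (\<tau> (Inl j))) =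
        (\<Sum>i\<in>J. \<Sum>c\<in>UNIV. a' (Inl i) * a' (Inr c) * Kb (\<tau> (Inl i)) (\<tau> (Inr c)))"
      by (subst sum.swap) (simp add: Kb_sym mult_ac)
    have m: "(\<Sum>i\<in>J. \<Sum>c\<in>UNIV. a' (Inl i) * a' (Inr c) * Kb (\<tau> (Inl i)) (\<tau> (Inr c))) = (z/6) * \<sigma>3"
      by (simp add: UNIV_bool a'_def \<tau>_def \<sigma>3_def sum_distrib_left algebra_simps)
    have f: "(\<Sum>i\<in>J. \<Sum>j\<in>J. a' (Inl i) * a' (Inl j) * Kb (\<tau> (Inl i)) (\<tau> (Inl j))) = p"
      by (simp add: a'_def \<tau>_def p_def)
    have l: "(\<Sum>c\<in>UNIV. \<Sum>c'\<in>UNIV. a' (Inr c) * a' (Inr c') * Kb (\<tau> (Inr c)) (\<tau> (Inr c'))) = z^2 / 54"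
      by (simp add: UNIV_bool a'_def \<tau>_def Kv power2_eq_square)
    show ?thesis unfolding A_def dsum_Plus[OF J(1) finite[of "UNIV::bool set"]] sw m f l by simp
  qed
  have T2: "(\<Sum>p\<in>A. \<Sum>m\<in>B. a' p * b m * kap (lo m) (hi m) (\<tau> p))
      = (x + z) * \<sigma>1 - z * \<sigma>2 + (z/6) * ((x + z) * (2/9) - z * (1/9))"
    using J by (simp add: A_def sum.Plus UNIV_bool a'_def \<tau>_def B_def lo_def hi_def b_def kv \<sigma>1_def \<sigma>2_def
        sum_distrib_left sum.distrib algebra_simps sum_subtractf)
  have T3: "(\<Sum>m\<in>B. \<Sum>m'\<in>B. b m * b m' * lam (lo m) (hi m) (lo m') (hi m'))
      = (x + z)^2 / 12 - 2 * (x + z) * z * (13/324) + z^2 * (7/324)"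
    by (simp add: B_def lo_def hi_def b_def lam_SS lam_SM lam_MS lam_MM) (simp add: field_simps power2_eq_square)
  have cZs: "(\<Sum>t\<in>J. a t * cZ t) = \<sigma>1 - \<sigma>2 + \<sigma>3 / 6"
  proof -
    have "(\<Sum>t\<in>J. a t * cZ t) = (\<Sum>t\<in>J. a t * kap 0 1 t - a t * kap (1/3) (2/3) t + (a t * (Kb t (1/3) + Kb t (2/3))) / 6)"
      by (intro sum.cong refl) (simp add: cZ_def algebra_simps)
    also have "\<dots> = \<sigma>1 - \<sigma>2 + \<sigma>3 / 6"
      unfolding \<sigma>1_def \<sigma>2_def \<sigma>3_def by (simp only: sum.distrib sum_subtractf sum_divide_distrib)
    finally show ?thesis .
  qed
  have Qe: "(\<Sum>p\<in>A. \<Sum>q\<in>A. a' p * a' q * Kb (\<tau> p) (\<tau> q))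
       + 2 * (\<Sum>p\<in>A. \<Sum>m\<in>B. a' p * b m * kap (lo m) (hi m) (\<tau> p))
       + (\<Sum>m\<in>B. \<Sum>m'\<in>B. b m * b m' * lam (lo m) (hi m) (lo m') (hi m'))
     = p + 2 * x * \<sigma>1 + 2 * z * (\<Sum>t\<in>J. a t * cZ t) + x^2 / 12 + 2 * x * z * (13/162) + z^2 * (13/162)"
    unfolding T1 T2 T3 cZs by (simp add: power2_eq_square field_simps)
  show ?thesis using GLi unfolding lhs Qe p_def \<sigma>1_def by simp
qed

lemma PW:
  fixes P Q :: "('i \<Rightarrow> real) measure"
  assumes fP: "finite_measure P" and fQ: "finite_measure Q"
    and sP: "sets P = sets (PiM I (\<lambda>_. borel))" and sQ: "sets Q = sets (PiM I (\<lambda>_. borel))"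
    and ch: "\<And>J a. finite J \<Longrightarrow> J \<subseteq> I \<Longrightarrow>
        (CLINT x|P. iexp (\<Sum>j\<in>J. a j * x j)) = (CLINT x|Q. iexp (\<Sum>j\<in>J. a j * x j))"
  shows "P = Q"
proof (rule measure_eqI_PiM_infinite[where I=I and M="\<lambda>_. borel"])
  show "sets P = sets (PiM I (\<lambda>_. borel))" "sets Q = sets (PiM I (\<lambda>_. borel))" by fact+
  show "finite_measure P" by fact
  fix J :: "'i set" and A :: "'i \<Rightarrow> real set" assume J: "finite J" "J \<subseteq> I" and A: "\<And>i. i \<in> J \<Longrightarrow> A i \<in> sets borel"
  let ?PJ = "PiM J (\<lambda>_. borel) :: ('i \<Rightarrow> real) measure"
  have rm: "(\<lambda>x. restrict x J) \<in> measurable (PiM I (\<lambda>_. borel)) ?PJ" by (rule measurable_restrict_subset[OF J(2)])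
  define R where "R = (\<lambda>m. distr m ?PJ (\<lambda>x. restrict x J))"
  have rch: "(CLINT x|R m. iexp (\<Sum>j\<in>J. a j * x j)) = (CLINT x|m. iexp (\<Sum>j\<in>J. a j * x j))"
    if sm: "sets m = sets (PiM I (\<lambda>_. borel))" for m a
  proof -
    have "(CLINT x|R m. iexp (\<Sum>j\<in>J. a j * x j)) = (CLINT x|m. iexp (\<Sum>j\<in>J. a j * restrict x J j))"
      unfolding R_def by (rule integral_distr[OF meas_tr'[OF sm rm]]) measurable
    also have "\<dots> = (CLINT x|m. iexp (\<Sum>j\<in>J. a j * x j))" by (simp cong: sum.cong)
    finally show ?thesis .
  qed
  have "R P = R Q"
  proof (rule CW[OF J(1)])
    show "finite_measure (R P)" unfolding R_def by (rule finite_measure.finite_measure_distr[OF fP meas_tr'[OF sP rm]])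
    show "finite_measure (R Q)" unfolding R_def by (rule finite_measure.finite_measure_distr[OF fQ meas_tr'[OF sQ rm]])
    show "sets (R P) = sets ?PJ" "sets (R Q) = sets ?PJ" by (simp_all add: R_def)
    fix a show "(CLINT x|R P. iexp (\<Sum>j\<in>J. a j * x j)) = (CLINT x|R Q. iexp (\<Sum>j\<in>J. a j * x j))"
      unfolding rch[OF sP] rch[OF sQ] by (rule ch[OF J])
  qed
  have PJ: "Pi\<^sub>E J A \<in> sets ?PJ" using A J(1) by (intro sets_PiM_I_finite) auto
  have em: "emeasure (R m) (Pi\<^sub>E J A) = emeasure m (prod_emb I (\<lambda>_. borel) J (Pi\<^sub>E J A))"
    if sm: "sets m = sets (PiM I (\<lambda>_. borel))" for m
  proof -
    have "emeasure (R m) (Pi\<^sub>E J A) = emeasure m ((\<lambda>x. restrict x J) -` Pi\<^sub>E J A \<inter> space m)"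
      unfolding R_def by (rule emeasure_distr[OF meas_tr'[OF sm rm] PJ])
    also have "(\<lambda>x. restrict x J) -` Pi\<^sub>E J A \<inter> space m = prod_emb I (\<lambda>_. borel) J (Pi\<^sub>E J A)"
      using sets_eq_imp_space_eq[OF sm] by (simp add: prod_emb_def space_PiM)
    finally show ?thesis .
  qed
  show "emeasure P (prod_emb I (\<lambda>_. borel) J (Pi\<^sub>E J A)) = emeasure Q (prod_emb I (\<lambda>_. borel) J (Pi\<^sub>E J A))"
    using em[OF sP] em[OF sQ] \<open>R P = R Q\<close> by simp
qed

lemma char_normal:
  assumes s: "\<sigma> > 0"
  shows "(CLINT x|density lborel (normal_density m \<sigma>). iexp (t * x)) = iexp (t * m) * complex_of_real (exp (- ((t * \<sigma>)\<^sup>2) / 2))"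
proof -
  interpret std: prob_space std_normal_distribution using real_dist_normal_dist by (simp add: real_distribution_def)
  have D0: "distributed std_normal_distribution lborel (\<lambda>x. x) (\<lambda>x. ennreal (normal_density 0 1 x))"
    unfolding distributed_def by (simp add: distr_id2)
  have D: "distributed std_normal_distribution lborel (\<lambda>x. m + \<sigma> * x) (\<lambda>x. ennreal (normal_density (m + \<sigma> * 0) (\<bar>\<sigma>\<bar> * 1) x))"
    by (rule std.normal_density_affine[OF D0]) (use s in auto)
  then have "distr std_normal_distribution lborel (\<lambda>x. m + \<sigma> * x) = density lborel (normal_density m \<sigma>)"
    using s by (simp add: distributed_def)
  then have "(CLINT x|density lborel (normal_density m \<sigma>). iexp (t * x)) = (CLINT x|distr std_normal_distribution lborel (\<lambda>x. m + \<sigma> * x). iexp (t * x))"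
    by simp
  also have "\<dots> = (CLINT x|std_normal_distribution. iexp (t * (m + \<sigma> * x)))"
    by (rule integral_distr[OF distributed_measurable[OF D]]) measurable
  also have "\<dots> = (CLINT x|std_normal_distribution. iexp (t * m) * iexp ((t * \<sigma>) * x))"
    by (simp add: exp_add[symmetric] algebra_simps)
  also have "\<dots> = iexp (t * m) * char std_normal_distribution (t * \<sigma>)"
    unfolding char_def by simp
  also have "\<dots> = iexp (t * m) * complex_of_real (exp (- ((t * \<sigma>)\<^sup>2) / 2))"
    by (simp add: char_std_normal_distribution)
  finally show ?thesis .
qed

lemma normal_law:
  assumes pM: "prob_space M" and X: "X \<in> borel_measurable M" and v: "v > 0"
    and ch: "\<And>u. (CLINT \<omega>|M. iexp (u * X \<omega>)) = complex_of_real (exp (- (u^2 * v) / 2))"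
  shows "distr M borel X = density lborel (normal_density 0 (sqrt v))"
proof (rule Levy_uniqueness)
  interpret prob_space M by fact
  show "real_distribution (distr M borel X)"
    by (simp add: real_distribution_def real_distribution_axioms_def prob_space_distr X)
  show "real_distribution (density lborel (normal_density 0 (sqrt v)))"
    by (rule real_distribution.intro[OF prob_space_normal_density]) (use v in \<open>simp_all add: real_distribution_axioms_def\<close>)
  show "char (distr M borel X) = char (density lborel (normal_density 0 (sqrt v)))"
  proof
    fix u
    have "char (distr M borel X) u = (CLINT \<omega>|M. iexp (u * X \<omega>))"
      unfolding char_def by (rule integral_distr[OF X]) measurable
    also have "\<dots> = complex_of_real (exp (- (u^2 * v) / 2))" by (rule ch)
    also have "\<dots> = char (density lborel (normal_density 0 (sqrt v))) u"
    proof -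
      have sv: "sqrt v > 0" using v by simp
      show ?thesis unfolding char_def char_normal[OF sv] using v by (simp add: power_mult_distrib)
    qed
    finally show "char (distr M borel X) u = char (density lborel (normal_density 0 (sqrt v))) u" .
  qed
qed

lemma L1: "integral {0..1} (bb_path \<beta> \<omega>) = Sint \<beta> \<omega>"
  unfolding bb_path_def Sint_def by (rule integral_cong) auto

lemma L2: "beta_c c (bb_path \<beta> \<omega>) = (\<lambda>t\<in>{0..1}. \<beta> t \<omega> + 6 * t * (1 - t) * (c - Sint \<beta> \<omega>))"
  unfolding beta_c_def L1 by (rule restrict_ext) (simp add: bb_path_def)

lemma LG: "Gamma_c c (bb_path \<beta> \<omega>) =
   (\<lambda>t\<in>{0..1}. \<beta> t \<omega> + (if t \<in> {1/3..2/3} then 18 * (9 * t * (1 - t) - 2) else 0) * (c - Sint \<beta> \<omega>))"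
  unfolding Gamma_c_def L1 by (rule restrict_ext) (simp add: bb_path_def)

lemma pair_pp: "prob_space M \<Longrightarrow> pair_prob_space M M"
  by (simp add: pair_prob_space_def pair_sigma_finite_def prob_space_imp_sigma_finite)

lemma prod_int:
  fixes f g :: "'a \<Rightarrow> complex"
  assumes pM: "prob_space M" and fm: "f \<in> borel_measurable M" and gm: "g \<in> borel_measurable M"
    and fb: "\<And>\<omega>. \<omega> \<in> space M \<Longrightarrow> norm (f \<omega>) \<le> B" and gb: "\<And>\<omega>. \<omega> \<in> space M \<Longrightarrow> norm (g \<omega>) \<le> B'"
  shows "(CLINT p|M \<Otimes>\<^sub>M M. f (fst p) * g (snd p)) = (CLINT \<omega>|M. f \<omega>) * (CLINT \<omega>|M. g \<omega>)"
proof -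
  interpret pp: pair_prob_space M M by (rule pair_pp[OF pM])
  have B: "0 \<le> B" using fb[of "SOME x. x \<in> space M"] pp.M1.not_empty by (metis norm_ge_zero order_trans some_in_eq)
  have int: "integrable (M \<Otimes>\<^sub>M M) (\<lambda>p. f (fst p) * g (snd p))"
  proof (rule integrable_bdd_fin[where B="B * B'"])
    show "finite_measure (M \<Otimes>\<^sub>M M)" by (rule prob_space.finite_measure[OF pp.P.prob_space_axioms])
    show "(\<lambda>p. f (fst p) * g (snd p)) \<in> borel_measurable (M \<Otimes>\<^sub>M M)" using fm gm by measurable
    fix p assume "p \<in> space (M \<Otimes>\<^sub>M M)"
    then have "fst p \<in> space M" "snd p \<in> space M" by (auto simp: space_pair_measure)
    then show "norm (f (fst p) * g (snd p)) \<le> B * B'"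
      using fb gb B by (simp add: norm_mult mult_mono)
  qed
  have "(CLINT p|M \<Otimes>\<^sub>M M. f (fst p) * g (snd p)) = (CLINT x|M. CLINT y|M. f x * g y)"
    using pp.integral_fst'[OF int] by simp
  also have "\<dots> = (CLINT x|M. f x * (CLINT y|M. g y))" by simp
  also have "\<dots> = (CLINT \<omega>|M. f \<omega>) * (CLINT \<omega>|M. g \<omega>)" by simp
  finally show ?thesis .
qed

lemma iexp_meas: "(\<lambda>x::real. iexp x) \<in> borel_measurable borel" by measurable

lemma sum_split2:
  assumes "finite J"
  shows "(\<Sum>j\<in>J. a j * F j) = (\<Sum>j\<in>J - {2}. a j * F j) + (if (2::real) \<in> J then a 2 else 0) * (F 2 :: real)"
proof (cases "(2::real) \<in> J")
  case True
  then have "J = insert 2 (J - {2})" by auto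
  then have "(\<Sum>j\<in>J. a j * F j) = (\<Sum>j\<in>insert 2 (J - {2}). a j * F j)" by simp
  also have "\<dots> = a 2 * F 2 + (\<Sum>j\<in>J - {2}. a j * F j)" using assms by (subst sum.insert) auto
  finally show ?thesis using True by simp
next
  case False then show ?thesis by simp
qed

lemma GqS:
  assumes "J \<subseteq> {0..1}"
  shows "(\<Sum>t\<in>J. a t * (6 * t * (1 - t))) = 12 * (\<Sum>t\<in>J. a t * kap 0 1 t)"
proof -
  have "(\<Sum>t\<in>J. a t * kap 0 1 t) = (\<Sum>t\<in>J. a t * (t * (1 - t) / 2))"
    using assms by (intro sum.cong refl) (auto simp: kap01)
  moreover have "12 * (\<Sum>t\<in>J. a t * (t * (1 - t) / 2)) = (\<Sum>t\<in>J. a t * (6 * t * (1 - t)))"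
    unfolding sum_distrib_left by (intro sum.cong refl) (simp add: field_simps)
  ultimately show ?thesis by simp
qed

lemma part1_law:
  fixes \<beta> :: "real \<Rightarrow> 'a \<Rightarrow> real"
  assumes bb: "brownian_bridge M \<beta>"
  defines "I2 \<equiv> insert 2 {0..1::real}"
  defines "aug1 \<equiv> (\<lambda>\<omega>. \<lambda>t\<in>I2. if t = 2 then Sint \<beta> \<omega> else \<beta> t \<omega>)"
  defines "aug2 \<equiv> (\<lambda>p. \<lambda>t\<in>I2. if t = 2 then Sint \<beta> (snd p) else \<beta> t (fst p) + 6 * t * (1 - t) * (Sint \<beta> (snd p) - Sint \<beta> (fst p)))"
  shows "distr M (PiM I2 (\<lambda>_. borel)) aug1 = distr (M \<Otimes>\<^sub>M M) (PiM I2 (\<lambda>_. borel)) aug2"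
proof -
  have pM: "prob_space M" by (rule bb_prob[OF bb])
  interpret pp: pair_prob_space M M by (rule pair_pp[OF pM])
  have mS: "Sint \<beta> \<in> borel_measurable M"
    unfolding Sint_def by (rule int_meas[OF bb]) auto
  have m1: "aug1 \<in> measurable M (PiM I2 (\<lambda>_. borel))"
    unfolding aug1_def
  proof (rule measurable_restrict)
    fix t assume "t \<in> I2"
    then show "(\<lambda>\<omega>. if t = 2 then Sint \<beta> \<omega> else \<beta> t \<omega>) \<in> borel_measurable M"
      using mS bb_meas[OF bb, of t] by (cases "t = 2") (auto simp: I2_def)
  qed
  have m2: "aug2 \<in> measurable (M \<Otimes>\<^sub>M M) (PiM I2 (\<lambda>_. borel))"
    unfolding aug2_def
  proof (rule measurable_restrict)
    fix t assume t: "t \<in> I2"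
    show "(\<lambda>p. if t = 2 then Sint \<beta> (snd p) else \<beta> t (fst p) + 6 * t * (1 - t) * (Sint \<beta> (snd p) - Sint \<beta> (fst p))) \<in> borel_measurable (M \<Otimes>\<^sub>M M)"
    proof (cases "t = 2")
      case True then show ?thesis using mS by simp
    next
      case False
      then have "t \<in> {0..1}" using t by (auto simp: I2_def)
      then have bt: "\<beta> t \<in> borel_measurable M" by (rule bb_meas[OF bb])
      show ?thesis using False bt mS by simp
    qed
  qed
  show ?thesis
  proof (rule PW)
    show "finite_measure (distr M (PiM I2 (\<lambda>_. borel)) aug1)"
      by (rule finite_measure.finite_measure_distr[OF prob_space.finite_measure[OF pM] m1])
    show "finite_measure (distr (M \<Otimes>\<^sub>M M) (PiM I2 (\<lambda>_. borel)) aug2)"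
      by (rule finite_measure.finite_measure_distr[OF prob_space.finite_measure[OF pp.P.prob_space_axioms] m2])
    show "sets (distr M (PiM I2 (\<lambda>_. borel)) aug1) = sets (PiM I2 (\<lambda>_. borel))" by simp
    show "sets (distr (M \<Otimes>\<^sub>M M) (PiM I2 (\<lambda>_. borel)) aug2) = sets (PiM I2 (\<lambda>_. borel))" by simp
    fix J :: "real set" and a :: "real \<Rightarrow> real" assume J: "finite J" "J \<subseteq> I2"
    define J' where "J' = J - {2}"
    define xx where "xx = (if (2::real) \<in> J then a 2 else 0)"
    have J': "finite J'" "J' \<subseteq> {0..1}" using J by (auto simp: J'_def I2_def)
    define G where "G = (\<Sum>t\<in>J'. a t * (6 * t * (1 - t)))"
    define q where "q = (\<Sum>t\<in>J'. a t * kap 0 1 t)"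
    define p where "p = (\<Sum>s\<in>J'. \<Sum>t\<in>J'. a s * a t * Kb s t)"
    have Gq: "G = 12 * q" unfolding G_def q_def by (rule GqS[OF J'(2)])
    have sumtr: "(\<lambda>x. iexp (\<Sum>j\<in>J. a j * x j)) \<in> borel_measurable (PiM I2 (\<lambda>_. borel))"
      apply measurable using J(2) by auto
    have e1: "(\<Sum>j\<in>J. a j * aug1 \<omega> j) = (\<Sum>t\<in>J'. a t * \<beta> t \<omega>) + xx * Sint \<beta> \<omega>" for \<omega>
    proof -
      have "(\<Sum>j\<in>J'. a j * aug1 \<omega> j) = (\<Sum>t\<in>J'. a t * \<beta> t \<omega>)"
        using J by (intro sum.cong refl) (auto simp: aug1_def J'_def I2_def)
      moreover have "aug1 \<omega> 2 = Sint \<beta> \<omega>" by (simp add: aug1_def I2_def)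
      ultimately show ?thesis using sum_split2[OF J(1), of a "aug1 \<omega>"] by (simp add: J'_def xx_def)
    qed
    have e2: "(\<Sum>j\<in>J. a j * aug2 p j) = ((\<Sum>t\<in>J'. a t * \<beta> t (fst p)) + (- G) * Sint \<beta> (fst p)) + (G + xx) * Sint \<beta> (snd p)" for p
    proof -
      have "(\<Sum>j\<in>J'. a j * aug2 p j) = (\<Sum>t\<in>J'. a t * \<beta> t (fst p) + a t * (6 * t * (1 - t)) * (Sint \<beta> (snd p) - Sint \<beta> (fst p)))"
        using J by (intro sum.cong refl) (auto simp: aug2_def J'_def I2_def algebra_simps)
      also have "\<dots> = (\<Sum>t\<in>J'. a t * \<beta> t (fst p)) + G * (Sint \<beta> (snd p) - Sint \<beta> (fst p))"
        by (simp add: sum.distrib G_def sum_distrib_right)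
      finally have "(\<Sum>j\<in>J'. a j * aug2 p j) = (\<Sum>t\<in>J'. a t * \<beta> t (fst p)) + G * (Sint \<beta> (snd p) - Sint \<beta> (fst p))" .
      moreover have "aug2 p 2 = Sint \<beta> (snd p)" by (simp add: aug2_def I2_def)
      ultimately show ?thesis using sum_split2[OF J(1), of a "aug2 p"] by (simp add: J'_def xx_def algebra_simps)
    qed
    have lhs: "(CLINT x|distr M (PiM I2 (\<lambda>_. borel)) aug1. iexp (\<Sum>j\<in>J. a j * x j)) =
        complex_of_real (exp (- (p + 2 * xx * q + xx^2 / 12) / 2))"
    proof -
      have "(CLINT x|distr M (PiM I2 (\<lambda>_. borel)) aug1. iexp (\<Sum>j\<in>J. a j * x j)) = (CLINT \<omega>|M. iexp (\<Sum>j\<in>J. a j * aug1 \<omega> j))"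
        by (rule integral_distr[OF m1 sumtr])
      also have "\<dots> = (CLINT \<omega>|M. iexp ((\<Sum>t\<in>J'. a t * \<beta> t \<omega>) + xx * Sint \<beta> \<omega> + 0 * Zf \<beta> \<omega>))"
        by (simp add: e1)
      also have "\<dots> = complex_of_real (exp (- (p + 2 * xx * q + xx^2 / 12) / 2))"
        unfolding GL3[OF bb J'] p_def q_def by simp
      finally show ?thesis .
    qed
    have rhs: "(CLINT x|distr (M \<Otimes>\<^sub>M M) (PiM I2 (\<lambda>_. borel)) aug2. iexp (\<Sum>j\<in>J. a j * x j)) =
        complex_of_real (exp (- (p + 2 * (- G) * q + (- G)^2 / 12) / 2)) * complex_of_real (exp (- ((G + xx)^2 / 12) / 2))"
    proof -
      define f where "f = (\<lambda>\<omega>. iexp ((\<Sum>t\<in>J'. a t * \<beta> t \<omega>) + (- G) * Sint \<beta> \<omega>))"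
      define g where "g = (\<lambda>\<omega>. iexp ((G + xx) * Sint \<beta> \<omega>))"
      have fm: "f \<in> borel_measurable M" unfolding f_def
        using J' bb_meas[OF bb] mS by (intro measurable_compose[OF _ iexp_meas] borel_measurable_add borel_measurable_sum borel_measurable_times borel_measurable_const) auto
      have gm: "g \<in> borel_measurable M" unfolding g_def
        using mS by (intro measurable_compose[OF _ iexp_meas] borel_measurable_times borel_measurable_const)
      have "(CLINT x|distr (M \<Otimes>\<^sub>M M) (PiM I2 (\<lambda>_. borel)) aug2. iexp (\<Sum>j\<in>J. a j * x j)) = (CLINT p|M \<Otimes>\<^sub>M M. iexp (\<Sum>j\<in>J. a j * aug2 p j))"
        by (rule integral_distr[OF m2 sumtr])
      also have "\<dots> = (CLINT p|M \<Otimes>\<^sub>M M. f (fst p) * g (snd p))"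
        by (simp add: e2 f_def g_def exp_add[symmetric] algebra_simps)
      also have "\<dots> = (CLINT \<omega>|M. f \<omega>) * (CLINT \<omega>|M. g \<omega>)"
        by (rule prod_int[OF pM fm gm, of 1 1]) (simp_all add: f_def g_def)
      also have "(CLINT \<omega>|M. f \<omega>) = (CLINT \<omega>|M. iexp ((\<Sum>t\<in>J'. a t * \<beta> t \<omega>) + (- G) * Sint \<beta> \<omega> + 0 * Zf \<beta> \<omega>))"
        by (simp add: f_def)
      also have "\<dots> = complex_of_real (exp (- (p + 2 * (- G) * q + (- G)^2 / 12) / 2))"
        unfolding GL3[OF bb J'] p_def q_def by simp
      also have "(CLINT \<omega>|M. g \<omega>) = (CLINT \<omega>|M. iexp ((\<Sum>t\<in>{}. (\<lambda>_. 0) t * \<beta> t \<omega>) + (G + xx) * Sint \<beta> \<omega> + 0 * Zf \<beta> \<omega>))"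
        by (simp add: g_def)
      also have "\<dots> = complex_of_real (exp (- ((G + xx)^2 / 12) / 2))"
        by (subst GL3[OF bb]) simp_all
      finally show ?thesis .
    qed
    have hid: "- (p + 2 * xx * q + xx^2 / 12) / 2 = - (p + 2 * (- G) * q + (- G)^2 / 12) / 2 + - ((G + xx)^2 / 12) / 2"
      unfolding Gq by (simp add: power2_eq_square field_simps)
    show "(CLINT x|distr M (PiM I2 (\<lambda>_. borel)) aug1. iexp (\<Sum>j\<in>J. a j * x j)) =
        (CLINT x|distr (M \<Otimes>\<^sub>M M) (PiM I2 (\<lambda>_. borel)) aug2. iexp (\<Sum>j\<in>J. a j * x j))"
      unfolding lhs rhs hid exp_add of_real_mult by simp
  qed
qed

lemma S_law:
  assumes bb: "brownian_bridge M \<beta>"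
  shows "distr M borel (Sint \<beta>) = density lborel (normal_density 0 (sqrt (1/12)))"
proof (rule normal_law[OF bb_prob[OF bb]])
  show "Sint \<beta> \<in> borel_measurable M" unfolding Sint_def by (rule int_meas[OF bb]) auto
  show "(0::real) < 1/12" by simp
  fix u
  have "(CLINT \<omega>|M. iexp (u * Sint \<beta> \<omega>)) = (CLINT \<omega>|M. iexp ((\<Sum>t\<in>{}. (\<lambda>_. 0) t * \<beta> t \<omega>) + u * Sint \<beta> \<omega> + 0 * Zf \<beta> \<omega>))"
    by simp
  also have "\<dots> = complex_of_real (exp (- (u^2 * (1/12)) / 2))"
    by (subst GL3[OF bb]) simp_all
  finally show "(CLINT \<omega>|M. iexp (u * Sint \<beta> \<omega>)) = complex_of_real (exp (- (u^2 * (1/12)) / 2))" .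
qed

lemma part1:
  fixes M :: "'a measure" and \<beta> :: "real \<Rightarrow> 'a \<Rightarrow> real" and \<Phi> :: "(real \<Rightarrow> real) \<Rightarrow> real" and A :: "real set"
  assumes bb: "brownian_bridge M \<beta>" and \<Phi>m: "\<Phi> \<in> borel_measurable path_space" and \<Phi>b: "\<And>x. \<bar>\<Phi> x\<bar> \<le> B"
    and A: "A \<in> sets borel"
  shows "(\<integral>\<omega>. \<Phi> (bb_path \<beta> \<omega>) * indicator A (integral {0..1} (bb_path \<beta> \<omega>)) \<partial>M) =
    (\<integral>c'. indicator A c' * (\<integral>\<omega>. \<Phi> (beta_c c' (bb_path \<beta> \<omega>)) \<partial>M) \<partial>density lborel (normal_density 0 (sqrt (1/12))))"
proof -
  have pM: "prob_space M" by (rule bb_prob[OF bb])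
  interpret prob_space M by (rule pM)
  interpret pp: pair_prob_space M M by (rule pair_pp[OF pM])
  have mS: "Sint \<beta> \<in> borel_measurable M"
    unfolding Sint_def by (rule int_meas[OF bb]) auto
  have B0: "0 \<le> B" using \<Phi>b[of undefined] by linarith
  define I2 where "I2 = insert 2 {0..1::real}"
  define aug1 where "aug1 = (\<lambda>\<omega>. \<lambda>t\<in>I2. if t = 2 then Sint \<beta> \<omega> else \<beta> t \<omega>)"
  define aug2 where "aug2 = (\<lambda>p. \<lambda>t\<in>I2. if t = 2 then Sint \<beta> (snd p) else \<beta> t (fst p) + 6 * t * (1 - t) * (Sint \<beta> (snd p) - Sint \<beta> (fst p)))"
  have law: "distr M (PiM I2 (\<lambda>_. borel)) aug1 = distr (M \<Otimes>\<^sub>M M) (PiM I2 (\<lambda>_. borel)) aug2"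
    unfolding I2_def aug1_def aug2_def by (rule part1_law[OF bb])
  have m1: "aug1 \<in> measurable M (PiM I2 (\<lambda>_. borel))"
    unfolding aug1_def
  proof (rule measurable_restrict)
    fix t assume "t \<in> I2"
    then show "(\<lambda>\<omega>. if t = 2 then Sint \<beta> \<omega> else \<beta> t \<omega>) \<in> borel_measurable M"
      using mS bb_meas[OF bb, of t] by (cases "t = 2") (auto simp: I2_def)
  qed
  have m2: "aug2 \<in> measurable (M \<Otimes>\<^sub>M M) (PiM I2 (\<lambda>_. borel))"
    unfolding aug2_def
  proof (rule measurable_restrict)
    fix t assume t: "t \<in> I2"
    show "(\<lambda>p. if t = 2 then Sint \<beta> (snd p) else \<beta> t (fst p) + 6 * t * (1 - t) * (Sint \<beta> (snd p) - Sint \<beta> (fst p))) \<in> borel_measurable (M \<Otimes>\<^sub>M M)"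
    proof (cases "t = 2")
      case True then show ?thesis using mS by simp
    next
      case False
      then have "t \<in> {0..1}" using t by (auto simp: I2_def)
      then have bt: "\<beta> t \<in> borel_measurable M" by (rule bb_meas[OF bb])
      show ?thesis using False bt mS by simp
    qed
  qed
  define \<Psi> where "\<Psi> = (\<lambda>x::real \<Rightarrow> real. \<Phi> (restrict x {0..1}) * indicator A (x 2))"
  have m\<Psi>: "\<Psi> \<in> borel_measurable (PiM I2 (\<lambda>_. borel))"
  proof -
    have r: "(\<lambda>x. restrict x {0..1}) \<in> measurable (PiM I2 (\<lambda>_. borel)) path_space"
      by (rule measurable_restrict_subset) (auto simp: I2_def)
    have c: "(\<lambda>x. x 2) \<in> measurable (PiM I2 (\<lambda>_. borel)) (borel :: real measure)"
      by (rule measurable_component_singleton) (simp add: I2_def)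
    show ?thesis unfolding \<Psi>_def
      by (intro borel_measurable_times measurable_compose[OF r \<Phi>m] measurable_compose[OF c borel_measurable_indicator[OF A]])
  qed
  define H where "H = (\<lambda>c' \<omega>. \<Phi> (beta_c c' (bb_path \<beta> \<omega>)))"
  have mH: "(\<lambda>(c', \<omega>). H c' \<omega>) \<in> borel_measurable (borel \<Otimes>\<^sub>M M)"
  proof -
    have "(\<lambda>p. (\<lambda>t\<in>{0..1}. \<beta> t (snd p) + 6 * t * (1 - t) * (fst p - Sint \<beta> (snd p)))) \<in> measurable (borel \<Otimes>\<^sub>M M) path_space"
    proof (rule measurable_restrict)
      fix t :: real assume "t \<in> {0..1}"
      then have bt: "\<beta> t \<in> borel_measurable M" by (rule bb_meas[OF bb])
      show "(\<lambda>p. \<beta> t (snd p) + 6 * t * (1 - t) * (fst p - Sint \<beta> (snd p))) \<in> borel_measurable (borel \<Otimes>\<^sub>M M)"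
        using bt mS by simp
    qed
    then have "(\<lambda>p. \<Phi> (\<lambda>t\<in>{0..1}. \<beta> t (snd p) + 6 * t * (1 - t) * (fst p - Sint \<beta> (snd p)))) \<in> borel_measurable (borel \<Otimes>\<^sub>M M)"
      by (rule measurable_compose[OF _ \<Phi>m])
    moreover have "(\<lambda>(c', \<omega>). H c' \<omega>) = (\<lambda>p. \<Phi> (\<lambda>t\<in>{0..1}. \<beta> t (snd p) + 6 * t * (1 - t) * (fst p - Sint \<beta> (snd p))))"
      by (auto simp: H_def L2 fun_eq_iff)
    ultimately show ?thesis by simp
  qed
  define F where "F = (\<lambda>c'. \<integral>\<omega>. H c' \<omega> \<partial>M)"
  have mF: "F \<in> borel_measurable borel"
    unfolding F_def by (rule sigma_finite_measure.borel_measurable_lebesgue_integral[OF prob_space_imp_sigma_finite[OF pM] mH])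
  have "(\<integral>\<omega>. \<Phi> (bb_path \<beta> \<omega>) * indicator A (integral {0..1} (bb_path \<beta> \<omega>)) \<partial>M) = (\<integral>\<omega>. \<Psi> (aug1 \<omega>) \<partial>M)"
  proof (rule Bochner_Integration.integral_cong[OF refl])
    fix \<omega> assume "\<omega> \<in> space M"
    have "restrict (aug1 \<omega>) {0..1} = bb_path \<beta> \<omega>" by (auto simp: aug1_def bb_path_def I2_def fun_eq_iff)
    moreover have "aug1 \<omega> 2 = integral {0..1} (bb_path \<beta> \<omega>)" by (simp add: aug1_def I2_def L1)
    ultimately show "\<Phi> (bb_path \<beta> \<omega>) * indicator A (integral {0..1} (bb_path \<beta> \<omega>)) = \<Psi> (aug1 \<omega>)"
      by (simp add: \<Psi>_def)
  qed
  also have "\<dots> = (\<integral>x. \<Psi> x \<partial>distr M (PiM I2 (\<lambda>_. borel)) aug1)"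
    by (rule integral_distr[OF m1 m\<Psi>, symmetric])
  also have "\<dots> = (\<integral>x. \<Psi> x \<partial>distr (M \<Otimes>\<^sub>M M) (PiM I2 (\<lambda>_. borel)) aug2)" by (simp add: law)
  also have "\<dots> = (\<integral>p. \<Psi> (aug2 p) \<partial>(M \<Otimes>\<^sub>M M))"
    by (rule integral_distr[OF m2 m\<Psi>])
  also have "\<dots> = (\<integral>(\<omega>, \<omega>'). H (Sint \<beta> \<omega>') \<omega> * indicator A (Sint \<beta> \<omega>') \<partial>(M \<Otimes>\<^sub>M M))"
  proof (rule Bochner_Integration.integral_cong[OF refl])
    fix p :: "'a \<times> 'a"
    have "restrict (aug2 p) {0..1} = beta_c (Sint \<beta> (snd p)) (bb_path \<beta> (fst p))"
      by (auto simp: aug2_def L2 I2_def fun_eq_iff algebra_simps)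
    moreover have "aug2 p 2 = Sint \<beta> (snd p)" by (simp add: aug2_def I2_def)
    ultimately show "\<Psi> (aug2 p) = (case p of (\<omega>, \<omega>') \<Rightarrow> H (Sint \<beta> \<omega>') \<omega> * indicator A (Sint \<beta> \<omega>'))"
      by (simp add: \<Psi>_def H_def split: prod.split)
  qed
  also have "\<dots> = (\<integral>\<omega>'. \<integral>\<omega>. H (Sint \<beta> \<omega>') \<omega> * indicator A (Sint \<beta> \<omega>') \<partial>M \<partial>M)"
  proof (rule pp.integral_snd[symmetric])
    show "integrable (M \<Otimes>\<^sub>M M) (\<lambda>(\<omega>, \<omega>'). H (Sint \<beta> \<omega>') \<omega> * indicator A (Sint \<beta> \<omega>'))"
    proof (rule integrable_bdd_fin[where B=B])
      show "finite_measure (M \<Otimes>\<^sub>M M)" by (rule prob_space.finite_measure[OF pp.P.prob_space_axioms])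
      have sw: "(\<lambda>p. (Sint \<beta> (snd p), fst p)) \<in> measurable (M \<Otimes>\<^sub>M M) (borel \<Otimes>\<^sub>M M)"
        using mS by measurable
      have "(\<lambda>p. (\<lambda>(c', \<omega>). H c' \<omega>) (Sint \<beta> (snd p), fst p)) \<in> borel_measurable (M \<Otimes>\<^sub>M M)"
        by (rule measurable_compose[OF sw mH])
      then have "(\<lambda>p. H (Sint \<beta> (snd p)) (fst p)) \<in> borel_measurable (M \<Otimes>\<^sub>M M)" by simp
      moreover have "(\<lambda>p. indicator A (Sint \<beta> (snd p)) :: real) \<in> borel_measurable (M \<Otimes>\<^sub>M M)"
        using mS A by measurable
      ultimately have "(\<lambda>p. H (Sint \<beta> (snd p)) (fst p) * indicator A (Sint \<beta> (snd p))) \<in> borel_measurable (M \<Otimes>\<^sub>M M)"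
        by (rule borel_measurable_times)
      then show "(\<lambda>(\<omega>, \<omega>'). H (Sint \<beta> \<omega>') \<omega> * indicator A (Sint \<beta> \<omega>')) \<in> borel_measurable (M \<Otimes>\<^sub>M M)"
        by (simp add: case_prod_beta)
      fix p :: "'a \<times> 'a"
      show "norm ((\<lambda>(\<omega>, \<omega>'). H (Sint \<beta> \<omega>') \<omega> * indicator A (Sint \<beta> \<omega>')) p) \<le> B"
        using \<Phi>b B0 by (auto simp: H_def indicator_def split: prod.split)
    qed
  qed
  also have "\<dots> = (\<integral>\<omega>'. F (Sint \<beta> \<omega>') * indicator A (Sint \<beta> \<omega>') \<partial>M)"
    by (simp add: F_def)
  also have "\<dots> = (\<integral>c'. F c' * indicator A c' \<partial>distr M borel (Sint \<beta>))"
    by (rule integral_distr[OF mS, symmetric]) (use mF A in measurable)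
  also have "\<dots> = (\<integral>c'. indicator A c' * F c' \<partial>density lborel (normal_density 0 (sqrt (1/12))))"
    by (simp add: S_law[OF bb] mult.commute)
  finally show ?thesis by (simp add: F_def H_def)
qed

lemma cZ_eval:
  assumes t: "t \<in> {0..1}"
  shows "cZ t = kap 0 1 t - (if t \<in> {1/3..2/3} then 18 * (9 * t * (1 - t) - 2) else 0) / 324"
proof -
  consider "t < 1/3" | "1/3 \<le> t \<and> t \<le> 2/3" | "2/3 < t" by linarith
  then show ?thesis
  proof cases
    case 1
    then have k: "kap (1/3) (2/3) t = t / 6" using t by (intro kapM_lo) auto
    have "Kb t (1/3) = 2 * t / 3" "Kb t (2/3) = t / 3" using 1 by (auto simp: Kb_def min_def)
    then show ?thesis using 1 unfolding cZ_def k by auto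
  next
    case 2
    then have k: "kap (1/3) (2/3) t = - 1/18 + t / 2 - t^2 / 2" by (intro kapM_mid) auto
    have "Kb t (1/3) = 1/3 - t / 3" "Kb t (2/3) = t / 3" using 2 by (auto simp: Kb_def min_def)
    then show ?thesis using 2 unfolding cZ_def k by (auto simp: field_simps power2_eq_square)
  next
    case 3
    then have k: "kap (1/3) (2/3) t = (1 - t) / 6" using t by (intro kapM_hi) auto
    have "Kb t (1/3) = 1/3 - t / 3" "Kb t (2/3) = 2/3 - 2 * t / 3" using 3 by (auto simp: Kb_def min_def)
    then show ?thesis using 3 unfolding cZ_def k by (auto simp: field_simps)
  qed
qed

lemma integral_reflect1:
  fixes f :: "real \<Rightarrow> real"
  shows "integral {0..1/3} (\<lambda>r. f (1 - r)) = integral {2/3..1} f"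
proof -
  have eq: "integral {- 0..- (-(1/3))} (\<lambda>x. (f \<circ> (+) 1) (- x)) = integral {-(1/3)..0} (f \<circ> (+) 1)"
    by (rule Henstock_Kurzweil_Integration.integral_reflect_real[of 0 "-(1/3)" "f \<circ> (+) 1"])
  have s1: "{- 0..- (-(1/3))} = {0..1/3::real}" by simp
  have s2: "(\<lambda>x. (f \<circ> (+) 1) (- x)) = (\<lambda>r. f (1 - r))" by (simp add: o_def)
  have 1: "integral {0..1/3} (\<lambda>r. f (1 - r)) = integral {-(1/3)..0} (f \<circ> (+) 1)"
    using eq unfolding s1 s2 .
  have 2: "integral {-(1/3)..0} (f \<circ> (+) 1) = integral {-(1/3)+1..0+1} f" by (rule integral_shift_Icc_real)
  show ?thesis using 1 2 by simp
qed

lemma rho_eq: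
  assumes bb: "brownian_bridge M \<beta>" and \<omega>: "\<omega> \<in> space M"
  shows "rho1 c (Gamma_c c (bb_path \<beta> \<omega>)) = sqrt 27 * exp (- 162 * (Zf \<beta> \<omega> - c)^2 + 6 * c^2)"
proof -
  define f where "f = (\<lambda>r. \<beta> r \<omega>)"
  have cont: "continuous_on {0..1} f" unfolding f_def by (rule bb_cont[OF bb \<omega>])
  have int: "f integrable_on {u..v}" if "0 \<le> u" "v \<le> 1" for u v
    by (rule integrable_continuous_real[OF continuous_on_subset[OF cont]]) (use that in auto)
  have h13: "18 * (9 * (1/3) * (1 - 1/3) - 2) = (0::real)" by simp
  have h23: "18 * (9 * (2/3) * (1 - 2/3) - 2) = (0::real)" by simp
  have G: "Gamma_c c (bb_path \<beta> \<omega>) r = f r" if "r \<in> {0..1/3} \<union> {2/3..1}" for r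
  proof (cases "r \<in> {1/3..2/3}")
    case True
    then have "r = 1/3 \<or> r = 2/3" using that by auto
    then show ?thesis
    proof (elim disjE)
      assume r: "r = 1/3" show ?thesis unfolding r by (simp add: LG f_def)
    next
      assume r: "r = 2/3" show ?thesis unfolding r by (simp add: LG f_def)
    qed
  next
    case False
    then show ?thesis using that unfolding LG f_def by auto
  qed
  have "integral {0..1/3} (\<lambda>r. Gamma_c c (bb_path \<beta> \<omega>) r + Gamma_c c (bb_path \<beta> \<omega>) (1 - r)) =
      integral {0..1/3} (\<lambda>r. f r + f (1 - r))"
    by (rule integral_cong) (auto simp: G)
  also have "\<dots> = integral {0..1/3} f + integral {0..1/3} (\<lambda>r. f (1 - r))"
  proof (rule integral_add)
    show "f integrable_on {0..1/3}" by (rule int) auto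
    have s1: "{- 0..- (-(1/3))} = {0..1/3::real}" by simp
    have s2: "(\<lambda>x. (f \<circ> (+) 1) (- x)) = (\<lambda>r. f (1 - r))" by (simp add: o_def)
    have "f integrable_on {-(1/3) + 1..0 + 1}" by (rule int) auto
    then have "(f \<circ> (+) 1) integrable_on {-(1/3)..0}"
      using integrable_on_shift_cbox[of f 1 "-(1/3)" 0] by (simp add: o_def add.commute)
    then have "(\<lambda>x. (f \<circ> (+) 1) (- x)) integrable_on {- 0..- (-(1/3))}"
      using Henstock_Kurzweil_Integration.integrable_reflect_real[of "f \<circ> (+) 1" 0 "-(1/3)"] by blast
    then show "(\<lambda>r. f (1 - r)) integrable_on {0..1/3}" unfolding s1 s2 .
  qed
  also have "\<dots> = integral {0..1/3} f + integral {2/3..1} f" by (simp add: integral_reflect1)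
  also have "\<dots> = Sint \<beta> \<omega> - Mint \<beta> \<omega>"
  proof -
    have "integral {0..1/3} f + integral {1/3..1} f = integral {0..1} f"
      by (rule Henstock_Kurzweil_Integration.integral_combine) (auto intro: int)
    moreover have "integral {1/3..2/3} f + integral {2/3..1} f = integral {1/3..1} f"
      by (rule Henstock_Kurzweil_Integration.integral_combine) (auto intro: int)
    ultimately show ?thesis by (simp add: Sint_def Mint_def f_def)
  qed
  finally have I: "integral {0..1/3} (\<lambda>r. Gamma_c c (bb_path \<beta> \<omega>) r + Gamma_c c (bb_path \<beta> \<omega>) (1 - r)) = Sint \<beta> \<omega> - Mint \<beta> \<omega>" .
  have g13: "Gamma_c c (bb_path \<beta> \<omega>) (1/3) = \<beta> (1/3) \<omega>" using G[of "1/3"] by (simp add: f_def)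
  have g23: "Gamma_c c (bb_path \<beta> \<omega>) (2/3) = \<beta> (2/3) \<omega>" using G[of "2/3"] by (simp add: f_def)
  show ?thesis unfolding rho1_def I g13 g23 Zf_def by simp
qed

lemma Zf_meas:
  assumes bb: "brownian_bridge M \<beta>"
  shows "Zf \<beta> \<in> borel_measurable M"
proof -
  have "Sint \<beta> \<in> borel_measurable M" unfolding Sint_def by (rule int_meas[OF bb]) auto
  moreover have "Mint \<beta> \<in> borel_measurable M" unfolding Mint_def by (rule int_meas[OF bb]) auto
  moreover have "\<beta> (1/3) \<in> borel_measurable M" "\<beta> (2/3) \<in> borel_measurable M" by (rule bb_meas[OF bb]; simp)+
  ultimately show ?thesis unfolding Zf_def[abs_def] by measurable
qed

lemma Z_law:
  assumes bb: "brownian_bridge M \<beta>"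
  shows "distr M borel (Zf \<beta>) = density lborel (normal_density 0 (sqrt (13/162)))"
proof (rule normal_law[OF bb_prob[OF bb] Zf_meas[OF bb]])
  show "(0::real) < 13/162" by simp
  fix u
  have "(CLINT \<omega>|M. iexp (u * Zf \<beta> \<omega>)) = (CLINT \<omega>|M. iexp ((\<Sum>t\<in>{}. (\<lambda>_. 0) t * \<beta> t \<omega>) + 0 * Sint \<beta> \<omega> + u * Zf \<beta> \<omega>))"
    by simp
  also have "\<dots> = complex_of_real (exp (- (u^2 * (13/162)) / 2))"
    by (subst GL3[OF bb]) (simp_all add: power2_eq_square)
  finally show "(CLINT \<omega>|M. iexp (u * Zf \<beta> \<omega>)) = complex_of_real (exp (- (u^2 * (13/162)) / 2))" .
qed

lemma gauss_tilt:
  fixes z c :: real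
  shows "normal_density 0 (sqrt (13/162)) z * (sqrt 27 * exp (- 162 * (z - c)^2 + 6 * c^2)) =
         normal_density (26 * c / 27) (sqrt (13/4374)) z"
proof -
  have sq1: "(sqrt (13/162::real))\<^sup>2 = 13/162" by (rule real_sqrt_pow2) simp
  have sq2: "(sqrt (13/4374::real))\<^sup>2 = 13/4374" by (rule real_sqrt_pow2) simp
  have coef: "1 / sqrt (2 * pi * (sqrt (13/162))\<^sup>2) * sqrt 27 = 1 / sqrt (2 * pi * (sqrt (13/4374))\<^sup>2)"
  proof -
    have "1 / sqrt (2 * pi * (13/162)) * sqrt 27 = sqrt 27 / sqrt (2 * pi * (13/162))" by simp
    also have "\<dots> = sqrt (27 / (2 * pi * (13/162)))" by (rule real_sqrt_divide[symmetric])
    also have "27 / (2 * pi * (13/162)) = 1 / (2 * pi * (13/4374))" by (simp add: field_simps)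
    also have "sqrt (1 / (2 * pi * (13/4374))) = 1 / sqrt (2 * pi * (13/4374))"
      by (simp only: real_sqrt_divide real_sqrt_one)
    finally show ?thesis unfolding sq1 sq2 .
  qed
  have ex: "- (z - 0)\<^sup>2 / (2 * (sqrt (13/162))\<^sup>2) + (- 162 * (z - c)^2 + 6 * c^2) = - (z - 26 * c / 27)\<^sup>2 / (2 * (sqrt (13/4374))\<^sup>2)"
    by (simp add: power2_eq_square field_simps)
  have "normal_density 0 (sqrt (13/162)) z * (sqrt 27 * exp (- 162 * (z - c)^2 + 6 * c^2)) =
      (1 / sqrt (2 * pi * (sqrt (13/162))\<^sup>2) * sqrt 27) * exp (- (z - 0)\<^sup>2 / (2 * (sqrt (13/162))\<^sup>2) + (- 162 * (z - c)^2 + 6 * c^2))"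
    unfolding normal_density_def exp_add by (simp add: mult_ac)
  also have "\<dots> = normal_density (26 * c / 27) (sqrt (13/4374)) z"
    unfolding coef ex normal_density_def ..
  finally show ?thesis .
qed

lemma EFZ:
  assumes bb: "brownian_bridge M \<beta>"
  shows "(CLINT \<omega>|M. complex_of_real (sqrt 27 * exp (- 162 * (Zf \<beta> \<omega> - c)^2 + 6 * c^2)) * iexp (l * Zf \<beta> \<omega>)) =
     iexp (l * (26 * c / 27)) * complex_of_real (exp (- ((l * sqrt (13/4374))\<^sup>2) / 2))"
proof -
  define F where "F = (\<lambda>z::real. sqrt 27 * exp (- 162 * (z - c)^2 + 6 * c^2))"
  have Fm: "F \<in> borel_measurable borel" unfolding F_def by measurable
  have hm: "(\<lambda>z. complex_of_real (F z) * iexp (l * z)) \<in> borel_measurable borel"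
    using Fm by measurable
  have "(CLINT \<omega>|M. complex_of_real (F (Zf \<beta> \<omega>)) * iexp (l * Zf \<beta> \<omega>)) =
      (CLINT z|distr M borel (Zf \<beta>). complex_of_real (F z) * iexp (l * z))"
    by (rule integral_distr[OF Zf_meas[OF bb] hm, symmetric])
  also have "\<dots> = (CLINT z|density lborel (normal_density 0 (sqrt (13/162))). complex_of_real (F z) * iexp (l * z))"
    by (simp add: Z_law[OF bb])
  also have "\<dots> = (CLINT z|lborel. normal_density 0 (sqrt (13/162)) z *\<^sub>R (complex_of_real (F z) * iexp (l * z)))"
    by (rule integral_density) (use hm in auto)
  also have "\<dots> = (CLINT z|lborel. normal_density (26 * c / 27) (sqrt (13/4374)) z *\<^sub>R iexp (l * z))"
  proof (rule Bochner_Integration.integral_cong[OF refl])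
    fix z :: real
    have "normal_density 0 (sqrt (13/162)) z *\<^sub>R (complex_of_real (F z) * iexp (l * z)) =
        complex_of_real (normal_density 0 (sqrt (13/162)) z * F z) * iexp (l * z)"
      by (simp add: scaleR_conv_of_real)
    also have "\<dots> = normal_density (26 * c / 27) (sqrt (13/4374)) z *\<^sub>R iexp (l * z)"
      unfolding F_def gauss_tilt by (simp add: scaleR_conv_of_real)
    finally show "normal_density 0 (sqrt (13/162)) z *\<^sub>R (complex_of_real (F z) * iexp (l * z)) =
        normal_density (26 * c / 27) (sqrt (13/4374)) z *\<^sub>R iexp (l * z)" .
  qed
  also have "\<dots> = (CLINT z|density lborel (normal_density (26 * c / 27) (sqrt (13/4374))). iexp (l * z))"
    by (rule integral_density[symmetric]) auto
  also have "\<dots> = iexp (l * (26 * c / 27)) * complex_of_real (exp (- ((l * sqrt (13/4374))\<^sup>2) / 2))"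
    by (rule char_normal) simp
  finally show ?thesis by (simp add: F_def)
qed

lemma GL3s:
  fixes \<beta> :: "real \<Rightarrow> 'a \<Rightarrow> real"
  assumes bb: "brownian_bridge M \<beta>" and J: "finite J" "J \<subseteq> {0..1}"
  shows "(CLINT \<omega>|M. iexp (w * ((\<Sum>t\<in>J. a t * \<beta> t \<omega>) + x * Sint \<beta> \<omega> + z * Zf \<beta> \<omega>) + y * Zf \<beta> \<omega>)) =
   complex_of_real (exp (- (w^2 * (\<Sum>s\<in>J. \<Sum>t\<in>J. a s * a t * Kb s t) + 2 * (w * x) * (w * (\<Sum>t\<in>J. a t * kap 0 1 t))
      + 2 * (w * z + y) * (w * (\<Sum>t\<in>J. a t * cZ t)) + (w * x)^2 / 12 + 2 * (w * x) * (w * z + y) * (13/162) + (w * z + y)^2 * (13/162)) / 2))"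
proof -
  have e: "w * ((\<Sum>t\<in>J. a t * \<beta> t \<omega>) + x * Sint \<beta> \<omega> + z * Zf \<beta> \<omega>) + y * Zf \<beta> \<omega> =
      (\<Sum>t\<in>J. (w * a t) * \<beta> t \<omega>) + (w * x) * Sint \<beta> \<omega> + (w * z + y) * Zf \<beta> \<omega>" for \<omega>
    by (simp add: sum_distrib_left algebra_simps)
  have s1: "(\<Sum>s\<in>J. \<Sum>t\<in>J. (w * a s) * (w * a t) * Kb s t) = w^2 * (\<Sum>s\<in>J. \<Sum>t\<in>J. a s * a t * Kb s t)"
    by (simp add: sum_distrib_left mult_ac power2_eq_square)
  have s2: "(\<Sum>t\<in>J. (w * a t) * kap 0 1 t) = w * (\<Sum>t\<in>J. a t * kap 0 1 t)"
    by (simp add: sum_distrib_left mult_ac)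
  have s3: "(\<Sum>t\<in>J. (w * a t) * cZ t) = w * (\<Sum>t\<in>J. a t * cZ t)"
    by (simp add: sum_distrib_left mult_ac)
  show ?thesis unfolding e GL3[OF bb J] s1 s2 s3 ..
qed

lemma indep_ZR:
  fixes f g :: "real \<Rightarrow> complex" and \<beta> :: "real \<Rightarrow> 'a \<Rightarrow> real"
  assumes bb: "brownian_bridge M \<beta>" and J: "finite J" "J \<subseteq> {0..1}"
    and cov: "(\<Sum>t\<in>J. a t * cZ t) + x * (13/162) + z * (13/162) = 0"
    and fm: "f \<in> borel_measurable borel" and gm: "g \<in> borel_measurable borel"
    and fb: "\<And>y. norm (f y) \<le> Bf" and gb: "\<And>y. norm (g y) \<le> Bg"
  shows "(CLINT \<omega>|M. f (Zf \<beta> \<omega>) * g ((\<Sum>t\<in>J. a t * \<beta> t \<omega>) + x * Sint \<beta> \<omega> + z * Zf \<beta> \<omega>)) =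
    (CLINT \<omega>|M. f (Zf \<beta> \<omega>)) * (CLINT \<omega>|M. g ((\<Sum>t\<in>J. a t * \<beta> t \<omega>) + x * Sint \<beta> \<omega> + z * Zf \<beta> \<omega>))"
proof -
  define R where "R = (\<lambda>\<omega>. (\<Sum>t\<in>J. a t * \<beta> t \<omega>) + x * Sint \<beta> \<omega> + z * Zf \<beta> \<omega>)"
  have pM: "prob_space M" by (rule bb_prob[OF bb])
  interpret pp: pair_prob_space M M by (rule pair_pp[OF pM])
  have mS: "Sint \<beta> \<in> borel_measurable M" unfolding Sint_def by (rule int_meas[OF bb]) auto
  have mZ: "Zf \<beta> \<in> borel_measurable M" by (rule Zf_meas[OF bb])
  have mR: "R \<in> borel_measurable M" unfolding R_def
    using J bb_meas[OF bb] mS mZ by (intro borel_measurable_add borel_measurable_sum borel_measurable_times borel_measurable_const) auto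
  define Two where "Two = {0::nat, 1}"
  define v1 where "v1 = (\<lambda>\<omega>. \<lambda>i\<in>Two. if i = 0 then Zf \<beta> \<omega> else R \<omega>)"
  define v2 where "v2 = (\<lambda>p. \<lambda>i\<in>Two. if i = 0 then Zf \<beta> (fst p) else R (snd p))"
  have m1: "v1 \<in> measurable M (PiM Two (\<lambda>_. borel))" unfolding v1_def
    by (rule measurable_restrict) (use mZ mR in auto)
  have m2: "v2 \<in> measurable (M \<Otimes>\<^sub>M M) (PiM Two (\<lambda>_. borel))" unfolding v2_def
    by (rule measurable_restrict) (use mZ mR in auto)
  define p where "p = (\<Sum>s\<in>J. \<Sum>t\<in>J. a s * a t * Kb s t)"
  define q where "q = (\<Sum>t\<in>J. a t * kap 0 1 t)"
  define r where "r = (\<Sum>t\<in>J. a t * cZ t)"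
  have law: "distr M (PiM Two (\<lambda>_. borel)) v1 = distr (M \<Otimes>\<^sub>M M) (PiM Two (\<lambda>_. borel)) v2"
  proof (rule CW)
    show "finite Two" by (simp add: Two_def)
    show "finite_measure (distr M (PiM Two (\<lambda>_. borel)) v1)"
      by (rule finite_measure.finite_measure_distr[OF prob_space.finite_measure[OF pM] m1])
    show "finite_measure (distr (M \<Otimes>\<^sub>M M) (PiM Two (\<lambda>_. borel)) v2)"
      by (rule finite_measure.finite_measure_distr[OF prob_space.finite_measure[OF pp.P.prob_space_axioms] m2])
    show "sets (distr M (PiM Two (\<lambda>_. borel)) v1) = sets (PiM Two (\<lambda>_. borel))" by simp
    show "sets (distr (M \<Otimes>\<^sub>M M) (PiM Two (\<lambda>_. borel)) v2) = sets (PiM Two (\<lambda>_. borel))" by simp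
    fix b :: "nat \<Rightarrow> real"
    have sm: "(\<lambda>y. iexp (\<Sum>j\<in>Two. b j * y j)) \<in> borel_measurable (PiM Two (\<lambda>_. borel))"
      unfolding Two_def by measurable
    have "(CLINT y|distr M (PiM Two (\<lambda>_. borel)) v1. iexp (\<Sum>j\<in>Two. b j * y j)) = (CLINT \<omega>|M. iexp (\<Sum>j\<in>Two. b j * v1 \<omega> j))"
      by (rule integral_distr[OF m1 sm])
    also have "\<dots> = (CLINT \<omega>|M. iexp (b 1 * R \<omega> + b 0 * Zf \<beta> \<omega>))"
      by (simp add: Two_def v1_def algebra_simps)
    also have "\<dots> = complex_of_real (exp (- ((b 1)^2 * p + 2 * (b 1 * x) * (b 1 * q) + 2 * (b 1 * z + b 0) * (b 1 * r)
         + (b 1 * x)^2 / 12 + 2 * (b 1 * x) * (b 1 * z + b 0) * (13/162) + (b 1 * z + b 0)^2 * (13/162)) / 2))"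
      unfolding R_def GL3s[OF bb J] p_def q_def r_def ..
    finally have L: "(CLINT y|distr M (PiM Two (\<lambda>_. borel)) v1. iexp (\<Sum>j\<in>Two. b j * y j)) =
       complex_of_real (exp (- ((b 1)^2 * p + 2 * (b 1 * x) * (b 1 * q) + 2 * (b 1 * z + b 0) * (b 1 * r)
         + (b 1 * x)^2 / 12 + 2 * (b 1 * x) * (b 1 * z + b 0) * (13/162) + (b 1 * z + b 0)^2 * (13/162)) / 2))" .
    have "(CLINT y|distr (M \<Otimes>\<^sub>M M) (PiM Two (\<lambda>_. borel)) v2. iexp (\<Sum>j\<in>Two. b j * y j)) =
        (CLINT q|M \<Otimes>\<^sub>M M. iexp (\<Sum>j\<in>Two. b j * v2 q j))"
      by (rule integral_distr[OF m2 sm])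
    also have "\<dots> = (CLINT q|M \<Otimes>\<^sub>M M. iexp (b 0 * Zf \<beta> (fst q)) * iexp (b 1 * R (snd q)))"
      by (simp add: Two_def v2_def exp_add[symmetric] algebra_simps)
    also have "\<dots> = (CLINT \<omega>|M. iexp (b 0 * Zf \<beta> \<omega>)) * (CLINT \<omega>|M. iexp (b 1 * R \<omega>))"
      by (rule prod_int[OF pM, of _ _ 1 1]) (use mZ mR in simp_all)
    also have "(CLINT \<omega>|M. iexp (b 0 * Zf \<beta> \<omega>)) = (CLINT \<omega>|M. iexp (0 * ((\<Sum>t\<in>{}. (\<lambda>_. 0) t * \<beta> t \<omega>) + 0 * Sint \<beta> \<omega> + 0 * Zf \<beta> \<omega>) + b 0 * Zf \<beta> \<omega>))"
      by simp
    also have "\<dots> = complex_of_real (exp (- ((b 0)^2 * (13/162)) / 2))"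
      by (subst GL3s[OF bb]) simp_all
    also have "(CLINT \<omega>|M. iexp (b 1 * R \<omega>)) = (CLINT \<omega>|M. iexp (b 1 * R \<omega> + 0 * Zf \<beta> \<omega>))" by simp
    also have "\<dots> = complex_of_real (exp (- ((b 1)^2 * p + 2 * (b 1 * x) * (b 1 * q) + 2 * (b 1 * z + 0) * (b 1 * r)
         + (b 1 * x)^2 / 12 + 2 * (b 1 * x) * (b 1 * z + 0) * (13/162) + (b 1 * z + 0)^2 * (13/162)) / 2))"
      unfolding R_def GL3s[OF bb J] p_def q_def r_def ..
    finally have Rr: "(CLINT y|distr (M \<Otimes>\<^sub>M M) (PiM Two (\<lambda>_. borel)) v2. iexp (\<Sum>j\<in>Two. b j * y j)) =
        complex_of_real (exp (- ((b 0)^2 * (13/162)) / 2)) * complex_of_real (exp (- ((b 1)^2 * p + 2 * (b 1 * x) * (b 1 * q) + 2 * (b 1 * z + 0) * (b 1 * r)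
         + (b 1 * x)^2 / 12 + 2 * (b 1 * x) * (b 1 * z + 0) * (13/162) + (b 1 * z + 0)^2 * (13/162)) / 2))" .
    have cov': "r = - x * (13/162) - z * (13/162)" using cov unfolding r_def by linarith
    have hid: "- ((b 1)^2 * p + 2 * (b 1 * x) * (b 1 * q) + 2 * (b 1 * z + b 0) * (b 1 * r)
         + (b 1 * x)^2 / 12 + 2 * (b 1 * x) * (b 1 * z + b 0) * (13/162) + (b 1 * z + b 0)^2 * (13/162)) / 2
       = - ((b 0)^2 * (13/162)) / 2 + - ((b 1)^2 * p + 2 * (b 1 * x) * (b 1 * q) + 2 * (b 1 * z + 0) * (b 1 * r)
         + (b 1 * x)^2 / 12 + 2 * (b 1 * x) * (b 1 * z + 0) * (13/162) + (b 1 * z + 0)^2 * (13/162)) / 2"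
      unfolding cov' by (simp add: power2_eq_square field_simps)
    show "(CLINT y|distr M (PiM Two (\<lambda>_. borel)) v1. iexp (\<Sum>j\<in>Two. b j * y j)) =
        (CLINT y|distr (M \<Otimes>\<^sub>M M) (PiM Two (\<lambda>_. borel)) v2. iexp (\<Sum>j\<in>Two. b j * y j))"
      unfolding L Rr hid exp_add of_real_mult ..
  qed
  define H where "H = (\<lambda>y::nat \<Rightarrow> real. f (y 0) * g (y 1))"
  have mH: "H \<in> borel_measurable (PiM Two (\<lambda>_. borel))"
  proof -
    have c0: "(\<lambda>y. y 0) \<in> measurable (PiM Two (\<lambda>_. borel)) (borel :: real measure)"
      by (rule measurable_component_singleton) (simp add: Two_def)
    have c1: "(\<lambda>y. y 1) \<in> measurable (PiM Two (\<lambda>_. borel)) (borel :: real measure)"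
      by (rule measurable_component_singleton) (simp add: Two_def)
    show ?thesis unfolding H_def
      by (intro borel_measurable_times measurable_compose[OF c0 fm] measurable_compose[OF c1 gm])
  qed
  have "(CLINT \<omega>|M. f (Zf \<beta> \<omega>) * g (R \<omega>)) = (CLINT \<omega>|M. H (v1 \<omega>))"
    by (simp add: H_def v1_def Two_def)
  also have "\<dots> = (CLINT y|distr M (PiM Two (\<lambda>_. borel)) v1. H y)"
    by (rule integral_distr[OF m1 mH, symmetric])
  also have "\<dots> = (CLINT y|distr (M \<Otimes>\<^sub>M M) (PiM Two (\<lambda>_. borel)) v2. H y)" by (simp add: law)
  also have "\<dots> = (CLINT q|M \<Otimes>\<^sub>M M. H (v2 q))" by (rule integral_distr[OF m2 mH])
  also have "\<dots> = (CLINT q|M \<Otimes>\<^sub>M M. f (Zf \<beta> (fst q)) * g (R (snd q)))"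
    by (simp add: H_def v2_def Two_def)
  also have "\<dots> = (CLINT \<omega>|M. f (Zf \<beta> \<omega>)) * (CLINT \<omega>|M. g (R \<omega>))"
    by (rule prod_int[OF pM _ _ fb gb]) (use measurable_compose[OF mZ fm] measurable_compose[OF mR gm] in auto)
  finally show ?thesis by (simp add: R_def)
qed

definition hh :: "real \<Rightarrow> real" where
  "hh t = (if t \<in> {1/3..2/3} then 18 * (9 * t * (1 - t) - 2) else 0)"

lemma part2_char:
  fixes \<beta> :: "real \<Rightarrow> 'a \<Rightarrow> real"
  assumes bb: "brownian_bridge M \<beta>" and J: "finite J" "J \<subseteq> {0..1}"
  shows "(CLINT \<omega>|M. iexp (\<Sum>t\<in>J. a t * beta_c c (bb_path \<beta> \<omega>) t)) =
         (CLINT \<omega>|M. rho1 c (Gamma_c c (bb_path \<beta> \<omega>)) *\<^sub>R iexp (\<Sum>t\<in>J. a t * Gamma_c c (bb_path \<beta> \<omega>) t))"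
proof -
  have pM: "prob_space M" by (rule bb_prob[OF bb])
  define p where "p = (\<Sum>s\<in>J. \<Sum>t\<in>J. a s * a t * Kb s t)"
  define q where "q = (\<Sum>t\<in>J. a t * kap 0 1 t)"
  define r where "r = (\<Sum>t\<in>J. a t * cZ t)"
  define G where "G = (\<Sum>t\<in>J. a t * (6 * t * (1 - t)))"
  define \<kappa> where "\<kappa> = (\<Sum>t\<in>J. a t * hh t)"
  define l where "l = 162 * r / 13 - \<kappa>"
  have Gq: "G = 12 * q" unfolding G_def q_def by (rule GqS[OF J(2)])
  have rq: "r = q - \<kappa> / 324"
  proof -
    have "r = (\<Sum>t\<in>J. a t * kap 0 1 t - a t * hh t / 324)"
      unfolding r_def using J(2) by (intro sum.cong refl) (auto simp: cZ_eval hh_def right_diff_distrib)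
    also have "\<dots> = q - \<kappa> / 324" by (simp add: q_def \<kappa>_def sum_subtractf sum_divide_distrib)
    finally show ?thesis .
  qed
  define P where "P = (\<lambda>\<omega>. \<Sum>t\<in>J. a t * \<beta> t \<omega>)"
  have lhs: "(CLINT \<omega>|M. iexp (\<Sum>t\<in>J. a t * beta_c c (bb_path \<beta> \<omega>) t)) =
      iexp (c * G) * complex_of_real (exp (- (p + 2 * (- G) * q + 2 * 0 * r + (- G)^2 / 12 + 2 * (- G) * 0 * (13/162) + 0^2 * (13/162)) / 2))"
  proof -
    have e: "(\<Sum>t\<in>J. a t * beta_c c (bb_path \<beta> \<omega>) t) = c * G + (P \<omega> + (- G) * Sint \<beta> \<omega> + 0 * Zf \<beta> \<omega>)" for \<omega>
    proof -
      have "(\<Sum>t\<in>J. a t * beta_c c (bb_path \<beta> \<omega>) t) = (\<Sum>t\<in>J. a t * \<beta> t \<omega> + a t * (6 * t * (1 - t)) * (c - Sint \<beta> \<omega>))"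
        using J(2) by (intro sum.cong refl) (auto simp: L2 algebra_simps)
      also have "\<dots> = (\<Sum>t\<in>J. a t * \<beta> t \<omega>) + (\<Sum>t\<in>J. a t * (6 * t * (1 - t))) * (c - Sint \<beta> \<omega>)"
        by (simp only: sum.distrib sum_distrib_right)
      also have "\<dots> = P \<omega> + G * (c - Sint \<beta> \<omega>)" by (simp add: P_def G_def)
      also have "\<dots> = c * G + (P \<omega> + (- G) * Sint \<beta> \<omega> + 0 * Zf \<beta> \<omega>)" by (simp add: algebra_simps)
      finally show ?thesis .
    qed
    have "(CLINT \<omega>|M. iexp (\<Sum>t\<in>J. a t * beta_c c (bb_path \<beta> \<omega>) t)) =
        (CLINT \<omega>|M. iexp (c * G) * iexp (P \<omega> + (- G) * Sint \<beta> \<omega> + 0 * Zf \<beta> \<omega>))"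
      unfolding e by (simp add: exp_add[symmetric] distrib_left)
    also have "\<dots> = iexp (c * G) * (CLINT \<omega>|M. iexp (P \<omega> + (- G) * Sint \<beta> \<omega> + 0 * Zf \<beta> \<omega>))" by simp
    also have "(CLINT \<omega>|M. iexp (P \<omega> + (- G) * Sint \<beta> \<omega> + 0 * Zf \<beta> \<omega>)) =
        complex_of_real (exp (- (p + 2 * (- G) * q + 2 * 0 * r + (- G)^2 / 12 + 2 * (- G) * 0 * (13/162) + 0^2 * (13/162)) / 2))"
      unfolding P_def GL3[OF bb J] p_def q_def r_def ..
    finally show ?thesis .
  qed
  define F where "F = (\<lambda>z::real. sqrt 27 * exp (- 162 * (z - c)^2 + 6 * c^2))"
  define f where "f = (\<lambda>z. complex_of_real (F z) * iexp (l * z))"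
  have Fb: "\<bar>F z\<bar> \<le> sqrt 27 * exp (6 * c^2)" for z
  proof -
    have "exp (- 162 * (z - c)^2 + 6 * c^2) \<le> exp (6 * c^2)" by simp
    then show ?thesis by (simp add: F_def)
  qed
  have fm: "f \<in> borel_measurable borel" unfolding f_def F_def by measurable
  have fb: "norm (f z) \<le> sqrt 27 * exp (6 * c^2)" for z using Fb[of z] by (simp add: f_def norm_mult)
  have im: "(\<lambda>x::real. iexp x) \<in> borel_measurable borel" by measurable
  have ib: "norm (iexp y) \<le> 1" for y by simp
  have cov: "r + (- \<kappa>) * (13/162) + (- l) * (13/162) = 0" by (simp add: l_def field_simps)
  have rhs: "(CLINT \<omega>|M. rho1 c (Gamma_c c (bb_path \<beta> \<omega>)) *\<^sub>R iexp (\<Sum>t\<in>J. a t * Gamma_c c (bb_path \<beta> \<omega>) t)) =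
     iexp (\<kappa> * c) * ((iexp (l * (26 * c / 27)) * complex_of_real (exp (- ((l * sqrt (13/4374))\<^sup>2) / 2))) *
       complex_of_real (exp (- (p + 2 * (- \<kappa>) * q + 2 * (- l) * r + (- \<kappa>)^2 / 12 + 2 * (- \<kappa>) * (- l) * (13/162) + (- l)^2 * (13/162)) / 2)))"
  proof -
    have e: "rho1 c (Gamma_c c (bb_path \<beta> \<omega>)) *\<^sub>R iexp (\<Sum>t\<in>J. a t * Gamma_c c (bb_path \<beta> \<omega>) t) =
        iexp (\<kappa> * c) * (f (Zf \<beta> \<omega>) * iexp (P \<omega> + (- \<kappa>) * Sint \<beta> \<omega> + (- l) * Zf \<beta> \<omega>))"
      if \<omega>: "\<omega> \<in> space M" for \<omega>
    proof -
      have s: "(\<Sum>t\<in>J. a t * Gamma_c c (bb_path \<beta> \<omega>) t) = P \<omega> + \<kappa> * (c - Sint \<beta> \<omega>)"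
      proof -
        have "(\<Sum>t\<in>J. a t * Gamma_c c (bb_path \<beta> \<omega>) t) = (\<Sum>t\<in>J. a t * \<beta> t \<omega> + a t * hh t * (c - Sint \<beta> \<omega>))"
          using J(2) by (intro sum.cong refl) (auto simp: LG hh_def algebra_simps)
        also have "\<dots> = (\<Sum>t\<in>J. a t * \<beta> t \<omega>) + (\<Sum>t\<in>J. a t * hh t) * (c - Sint \<beta> \<omega>)"
          by (simp only: sum.distrib sum_distrib_right)
        finally show ?thesis by (simp add: P_def \<kappa>_def)
      qed
      have "rho1 c (Gamma_c c (bb_path \<beta> \<omega>)) = F (Zf \<beta> \<omega>)" unfolding F_def by (rule rho_eq[OF bb \<omega>])
      then show ?thesis unfolding s f_def
        by (simp add: scaleR_conv_of_real exp_add[symmetric] algebra_simps)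
    qed
    have "(CLINT \<omega>|M. rho1 c (Gamma_c c (bb_path \<beta> \<omega>)) *\<^sub>R iexp (\<Sum>t\<in>J. a t * Gamma_c c (bb_path \<beta> \<omega>) t)) =
        (CLINT \<omega>|M. iexp (\<kappa> * c) * (f (Zf \<beta> \<omega>) * iexp (P \<omega> + (- \<kappa>) * Sint \<beta> \<omega> + (- l) * Zf \<beta> \<omega>)))"
      by (rule Bochner_Integration.integral_cong[OF refl e])
    also have "\<dots> = iexp (\<kappa> * c) * (CLINT \<omega>|M. f (Zf \<beta> \<omega>) * iexp (P \<omega> + (- \<kappa>) * Sint \<beta> \<omega> + (- l) * Zf \<beta> \<omega>))"
      by simp
    also have "(CLINT \<omega>|M. f (Zf \<beta> \<omega>) * iexp (P \<omega> + (- \<kappa>) * Sint \<beta> \<omega> + (- l) * Zf \<beta> \<omega>)) =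
        (CLINT \<omega>|M. f (Zf \<beta> \<omega>)) * (CLINT \<omega>|M. iexp (P \<omega> + (- \<kappa>) * Sint \<beta> \<omega> + (- l) * Zf \<beta> \<omega>))"
      unfolding P_def by (rule indep_ZR[OF bb J _ fm im fb ib]) (use cov in \<open>simp add: r_def\<close>)
    also have "(CLINT \<omega>|M. f (Zf \<beta> \<omega>)) = iexp (l * (26 * c / 27)) * complex_of_real (exp (- ((l * sqrt (13/4374))\<^sup>2) / 2))"
      unfolding f_def F_def by (rule EFZ[OF bb])
    also have "(CLINT \<omega>|M. iexp (P \<omega> + (- \<kappa>) * Sint \<beta> \<omega> + (- l) * Zf \<beta> \<omega>)) =
        complex_of_real (exp (- (p + 2 * (- \<kappa>) * q + 2 * (- l) * r + (- \<kappa>)^2 / 12 + 2 * (- \<kappa>) * (- l) * (13/162) + (- l)^2 * (13/162)) / 2))"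
      unfolding P_def GL3[OF bb J] p_def q_def r_def ..
    finally show ?thesis .
  qed
  have im1: "c * G = \<kappa> * c + l * (26 * c / 27)"
    unfolding Gq l_def rq by (simp add: field_simps)
  have sq: "(l * sqrt (13/4374))\<^sup>2 = l^2 * (13/4374)" by (simp add: power_mult_distrib)
  have re1: "- (p + 2 * (- G) * q + 2 * 0 * r + (- G)^2 / 12 + 2 * (- G) * 0 * (13/162) + 0^2 * (13/162)) / 2 =
     - ((l * sqrt (13/4374))\<^sup>2) / 2 + - (p + 2 * (- \<kappa>) * q + 2 * (- l) * r + (- \<kappa>)^2 / 12 + 2 * (- \<kappa>) * (- l) * (13/162) + (- l)^2 * (13/162)) / 2"
    unfolding sq Gq l_def rq by (simp add: power2_eq_square field_simps)
  have "iexp (c * G) = iexp (\<kappa> * c) * iexp (l * (26 * c / 27))"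
    unfolding im1 by (simp add: exp_add[symmetric] distrib_left)
  then show ?thesis unfolding lhs rhs re1 exp_add of_real_mult by (simp add: mult_ac)
qed

lemma part2:
  fixes M :: "'a measure" and \<beta> :: "real \<Rightarrow> 'a \<Rightarrow> real" and \<Phi> :: "(real \<Rightarrow> real) \<Rightarrow> real"
  assumes bb: "brownian_bridge M \<beta>" and \<Phi>m: "\<Phi> \<in> borel_measurable path_space" and \<Phi>b: "\<And>x. \<bar>\<Phi> x\<bar> \<le> B"
  shows "(\<integral>\<omega>. \<Phi> (beta_c c (bb_path \<beta> \<omega>)) \<partial>M) =
    (\<integral>\<omega>. \<Phi> (Gamma_c c (bb_path \<beta> \<omega>)) * rho1 c (Gamma_c c (bb_path \<beta> \<omega>)) \<partial>M)"
proof -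
  have pM: "prob_space M" by (rule bb_prob[OF bb])
  have mS: "Sint \<beta> \<in> borel_measurable M" unfolding Sint_def by (rule int_meas[OF bb]) auto
  have mZ: "Zf \<beta> \<in> borel_measurable M" by (rule Zf_meas[OF bb])
  define bc where "bc = (\<lambda>\<omega>. beta_c c (bb_path \<beta> \<omega>))"
  define \<Gamma> where "\<Gamma> = (\<lambda>\<omega>. Gamma_c c (bb_path \<beta> \<omega>))"
  define \<rho> where "\<rho> = (\<lambda>\<omega>. rho1 c (\<Gamma> \<omega>))"
  have mbc: "bc \<in> measurable M path_space"
  proof -
    have "bc = (\<lambda>\<omega>. \<lambda>t\<in>{0..1}. \<beta> t \<omega> + 6 * t * (1 - t) * (c - Sint \<beta> \<omega>))"
      unfolding bc_def by (rule ext) (rule L2)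
    also have "\<dots> \<in> measurable M path_space"
    proof (rule measurable_restrict)
      fix t :: real assume "t \<in> {0..1}"
      then have "\<beta> t \<in> borel_measurable M" by (rule bb_meas[OF bb])
      then show "(\<lambda>\<omega>. \<beta> t \<omega> + 6 * t * (1 - t) * (c - Sint \<beta> \<omega>)) \<in> borel_measurable M" using mS by simp
    qed
    finally show ?thesis .
  qed
  have m\<Gamma>: "\<Gamma> \<in> measurable M path_space"
  proof -
    have "\<Gamma> = (\<lambda>\<omega>. \<lambda>t\<in>{0..1}. \<beta> t \<omega> + (if t \<in> {1/3..2/3} then 18 * (9 * t * (1 - t) - 2) else 0) * (c - Sint \<beta> \<omega>))"
      unfolding \<Gamma>_def by (rule ext) (rule LG)
    also have "\<dots> \<in> measurable M path_space"
    proof (rule measurable_restrict)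
      fix t :: real assume "t \<in> {0..1}"
      then have "\<beta> t \<in> borel_measurable M" by (rule bb_meas[OF bb])
      then show "(\<lambda>\<omega>. \<beta> t \<omega> + (if t \<in> {1/3..2/3} then 18 * (9 * t * (1 - t) - 2) else 0) * (c - Sint \<beta> \<omega>)) \<in> borel_measurable M"
        using mS by simp
    qed
    finally show ?thesis .
  qed
  have m\<rho>: "\<rho> \<in> borel_measurable M"
  proof -
    have "(\<lambda>\<omega>. sqrt 27 * exp (- 162 * (Zf \<beta> \<omega> - c)^2 + 6 * c^2)) \<in> borel_measurable M" using mZ by measurable
    moreover have "\<And>\<omega>. \<omega> \<in> space M \<Longrightarrow> \<rho> \<omega> = sqrt 27 * exp (- 162 * (Zf \<beta> \<omega> - c)^2 + 6 * c^2)"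
      unfolding \<rho>_def \<Gamma>_def by (rule rho_eq[OF bb])
    ultimately show ?thesis by (simp cong: measurable_cong)
  qed
  have \<rho>b: "0 \<le> \<rho> \<omega> \<and> \<rho> \<omega> \<le> sqrt 27 * exp (6 * c^2)" for \<omega>
    by (simp add: \<rho>_def rho1_def)
  define D where "D = density M (\<lambda>\<omega>. ennreal (\<rho> \<omega>))"
  have fD: "finite_measure D" unfolding D_def
    by (rule finite_density_bdd[OF prob_space.finite_measure[OF pM] m\<rho> \<rho>b])
  have sD: "sets D = sets M" by (simp add: D_def)
  have m\<Gamma>D: "\<Gamma> \<in> measurable D path_space" by (rule meas_tr'[OF sD m\<Gamma>])
  have law: "distr M path_space bc = distr D path_space \<Gamma>"
  proof (rule PW)
    show "finite_measure (distr M path_space bc)"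
      by (rule finite_measure.finite_measure_distr[OF prob_space.finite_measure[OF pM] mbc])
    show "finite_measure (distr D path_space \<Gamma>)" by (rule finite_measure.finite_measure_distr[OF fD m\<Gamma>D])
    show "sets (distr M path_space bc) = sets path_space" "sets (distr D path_space \<Gamma>) = sets path_space" by simp_all
    fix J :: "real set" and a :: "real \<Rightarrow> real" assume J: "finite J" "J \<subseteq> {0..1}"
    have sm: "(\<lambda>y. iexp (\<Sum>j\<in>J. a j * y j)) \<in> borel_measurable path_space"
      apply measurable using J(2) by auto
    have "(CLINT y|distr M path_space bc. iexp (\<Sum>j\<in>J. a j * y j)) = (CLINT \<omega>|M. iexp (\<Sum>j\<in>J. a j * bc \<omega> j))"
      by (rule integral_distr[OF mbc sm])
    also have "\<dots> = (CLINT \<omega>|M. \<rho> \<omega> *\<^sub>R iexp (\<Sum>j\<in>J. a j * \<Gamma> \<omega> j))"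
      unfolding bc_def \<rho>_def \<Gamma>_def by (rule part2_char[OF bb J])
    also have "\<dots> = (CLINT \<omega>|D. iexp (\<Sum>j\<in>J. a j * \<Gamma> \<omega> j))"
      unfolding D_def by (rule integral_density[symmetric]) (use measurable_compose[OF m\<Gamma> sm] m\<rho> \<rho>b in auto)
    also have "\<dots> = (CLINT y|distr D path_space \<Gamma>. iexp (\<Sum>j\<in>J. a j * y j))"
      by (rule integral_distr[OF m\<Gamma>D sm, symmetric])
    finally show "(CLINT y|distr M path_space bc. iexp (\<Sum>j\<in>J. a j * y j)) = (CLINT y|distr D path_space \<Gamma>. iexp (\<Sum>j\<in>J. a j * y j))" .
  qed
  have "(\<integral>\<omega>. \<Phi> (bc \<omega>) \<partial>M) = (\<integral>y. \<Phi> y \<partial>distr M path_space bc)"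
    by (rule integral_distr[OF mbc \<Phi>m, symmetric])
  also have "\<dots> = (\<integral>y. \<Phi> y \<partial>distr D path_space \<Gamma>)" by (simp add: law)
  also have "\<dots> = (\<integral>\<omega>. \<Phi> (\<Gamma> \<omega>) \<partial>D)" by (rule integral_distr[OF m\<Gamma>D \<Phi>m])
  also have "\<dots> = (\<integral>\<omega>. \<rho> \<omega> *\<^sub>R \<Phi> (\<Gamma> \<omega>) \<partial>M)"
    unfolding D_def by (rule integral_density) (use measurable_compose[OF m\<Gamma> \<Phi>m] m\<rho> \<rho>b in auto)
  also have "\<dots> = (\<integral>\<omega>. \<Phi> (\<Gamma> \<omega>) * \<rho> \<omega> \<partial>M)" by (simp add: mult.commute)
  finally show ?thesis by (simp add: bc_def \<Gamma>_def \<rho>_def)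
qed

theorem lemma4p4:
  fixes M :: "'a measure" and \<beta> :: "real \<Rightarrow> 'a \<Rightarrow> real" and c :: real
    and \<Phi> :: "(real \<Rightarrow> real) \<Rightarrow> real"
  assumes bb: "brownian_bridge M \<beta>"
    and \<Phi>_meas: "\<Phi> \<in> borel_measurable path_space"
    and \<Phi>_bdd: "\<exists>B. \<forall>x. \<bar>\<Phi> x\<bar> \<le> B"
  shows "(\<forall>A\<in>sets borel.
            (\<integral>\<omega>. \<Phi> (bb_path \<beta> \<omega>) * indicator A (integral {0..1} (bb_path \<beta> \<omega>)) \<partial>M) =
            (\<integral>c'. indicator A c' * (\<integral>\<omega>. \<Phi> (beta_c c' (bb_path \<beta> \<omega>)) \<partial>M)
               \<partial>density lborel (normal_density 0 (sqrt (1/12)))))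
       \<and> (\<integral>\<omega>. \<Phi> (beta_c c (bb_path \<beta> \<omega>)) \<partial>M) =
         (\<integral>\<omega>. \<Phi> (Gamma_c c (bb_path \<beta> \<omega>)) * rho1 c (Gamma_c c (bb_path \<beta> \<omega>)) \<partial>M)"
proof -
  obtain B where B: "\<And>x. \<bar>\<Phi> x\<bar> \<le> B" using \<Phi>_bdd by blast
  show ?thesis
  proof (intro conjI ballI)
    fix A :: "real set" assume "A \<in> sets borel"
    then show "(\<integral>\<omega>. \<Phi> (bb_path \<beta> \<omega>) * indicator A (integral {0..1} (bb_path \<beta> \<omega>)) \<partial>M) =
            (\<integral>c'. indicator A c' * (\<integral>\<omega>. \<Phi> (beta_c c' (bb_path \<beta> \<omega>)) \<partial>M)
               \<partial>density lborel (normal_density 0 (sqrt (1/12))))"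
      by (rule part1[OF bb \<Phi>_meas B])
  next
    show "(\<integral>\<omega>. \<Phi> (beta_c c (bb_path \<beta> \<omega>)) \<partial>M) =
         (\<integral>\<omega>. \<Phi> (Gamma_c c (bb_path \<beta> \<omega>)) * rho1 c (Gamma_c c (bb_path \<beta> \<omega>)) \<partial>M)"
      by (rule part2[OF bb \<Phi>_meas B])
  qed
qed

end
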